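(* Consider the system $$\dot x=-y+x(x^3+xy^2)+\sum_{k=1}^2\varepsilon^k\Big(\lambda_kx+\sum_{i+j=4}a_{k,i,j}x^iy^j\Big),\qquad \dot y=x+y(x^3+xy^2)+\sum_{k=1}^2\varepsilon^k\Big(\lambda_ky+\sum_{i+j=4}b_{k,i,j}x^iy^j\Big)$$ with real coefficients. For $|\varepsilon|>0$ sufficiently small: (1) the first order averaging method yields at most three limit cycles bifurcating from the periodic orbits of the unperturbed system (the center at the origin of $\dot x=-y+x(x^3+xy^2)$, $\dot y=x+y(x^3+xy^2)$), and three is reached; (2) under the conditions $a_{1,1,3}=b_{1,0,4}$, $a_{1,3,1}=b_{1,2,2}$, $b_{1,4,0}=\lambda_1=0$ (so that $f_1\equiv0$) together with $a_{1,2,2}=b_{1,1,3}$, $a_{1,4,0}=b_{1,3,1}$, $a_{1,0,4}=0$, the second order averaging method yields at most three limit cycles, and three is reached. More precisely, under these conditions, with $z=\big[\frac{1-s^2}{3(1+s^2)}\big]^{1/3}$, $s\in(0,1)$, the second order averaged function equals $$\frac{\pi\,3^{2/3}(1-s)^{1/3}}{108(1+s)^{11/3}(1+s^2)^{4/3}}\big(H_1s^6+H_2s^5+H_3s^4+H_4s^3+H_3s^2+H_2s+H_1\big),$$ where $H_1=3a_{2,1,3}+a_{2,3,1}-3b_{2,0,4}-b_{2,2,2}-3b_{2,4,0}+72\lambda_2$, $H_2=-4a_{2,1,3}+4b_{2,0,4}+4a_{2,3,1}-4b_{2,2,2}-12b_{2,4,0}+288\lambda_2$, $H_3=5a_{2,1,3}-9a_{2,3,1}-5b_{2,0,4}+9b_{2,2,2}-5b_{2,4,0}+504\lambda_2$,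 $H_4=-8a_{2,1,3}+8a_{2,3,1}+8b_{2,0,4}-8b_{2,2,2}+40b_{2,4,0}+576\lambda_2$.
   Context: Averaging framework. In polar coordinates $x=r\cos\theta$, $y=r\sin\theta$ expand $dr/d\theta=F_0(\theta,r)+\varepsilon F_1(\theta,r)+\varepsilon^2F_2(\theta,r)+O(\varepsilon^3)$; here $F_0=r^4\cos\theta$. Let $r(\theta,z)=z(1-3z^3\sin\theta)^{-1/3}$ (solution of $dr/d\theta=F_0$, $r(0)=z$, $2\pi$-periodic and positive for $z\in D=(0,3^{-1/3})$) and $Y(\theta,z)=(1-3z^3\sin\theta)^{-4/3}$ (solution of $Y'=\partial_rF_0(\theta,r(\theta,z))Y$, $Y(0)=1$). Define $y_1(\theta,z)=Y(\theta,z)\int_0^\theta Y^{-1}F_1\,ds$ and $y_2(\theta,z)=Y(\theta,z)\int_0^\theta Y^{-1}\big(2F_2+\partial_r^2F_0\,y_1^2+2\partial_rF_1\,y_1\big)ds$, with $F_j$ evaluated at $(s,r(s,z))$. The averaged functions are $f_1(z)=y_1(2\pi,z)$, $f_2(z)=y_2(2\pi,z)/2$. By the averaging theorem, if $f_1\equiv\dots\equiv f_{j-1}\equiv0$ and $z^*\in D$ is a simple zero of $f_j$, then for $|\varepsilon|$ small the system has a limit cycle tending to the periodic orbit through $(z^*,0)$. "The $j$-th order averaging method yields at most $n$ limit cycles, and $n$ is reached" means that over all admissible coefficient choices with $f_1\equiv\dots\equiv f_{j-1}\equiv 0$, $f_j\not\equiv0$, the function $f_j$ has at most $n$ simple zeros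 in $D$, and some choice gives exactly $n$. *)

theory Defs
  imports "HOL-Analysis.Analysis"
begin

text \<open>Coefficients: a k i j = a_{k,i,j}, b k i j = b_{k,i,j}, lam k = lambda_k
  (only k in {1,2} and i+j=4 are used).\<close>

definition Pfield :: "(nat \<Rightarrow> nat \<Rightarrow> nat \<Rightarrow> real) \<Rightarrow> (nat \<Rightarrow> real) \<Rightarrow> real \<Rightarrow> real \<Rightarrow> real \<Rightarrow> real" where
  "Pfield a lam e x y = - y + x * (x^3 + x * y^2)
     + (\<Sum>k\<in>{1,2}. e^k * (lam k * x + (\<Sum>i\<le>4. a k i (4 - i) * x^i * y^(4 - i))))"

definition Qfield :: "(nat \<Rightarrow> nat \<Rightarrow> nat \<Rightarrow> real) \<Rightarrow> (nat \<Rightarrow> real) \<Rightarrow> real \<Rightarrow> real \<Rightarrow> real \<Rightarrow> real" where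
  "Qfield b lam e x y = x + y * (x^3 + x * y^2)
     + (\<Sum>k\<in>{1,2}. e^k * (lam k * y + (\<Sum>i\<le>4. b k i (4 - i) * x^i * y^(4 - i))))"

text \<open>dr/dtheta in polar coordinates: (dr/dt)/(dtheta/dt) = r (xP+yQ)/(xQ-yP).\<close>
definition drdtheta where
  "drdtheta a b lam e \<theta> r =
     (let x = r * cos \<theta>; y = r * sin \<theta>;
          P = Pfield a lam e x y; Q = Qfield b lam e x y
      in r * (x * P + y * Q) / (x * Q - y * P))"

definition Fc where
  "Fc a b lam j \<theta> r = ((deriv ^^ j) (\<lambda>e. drdtheta a b lam e \<theta> r) 0) / fact j"

definition rsol :: "real \<Rightarrow> real \<Rightarrow> real" where
  "rsol \<theta> z = z * (1 - 3 * z^3 * sin \<theta>) powr (-1/3)"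

definition Ysol :: "real \<Rightarrow> real \<Rightarrow> real" where
  "Ysol \<theta> z = (1 - 3 * z^3 * sin \<theta>) powr (-4/3)"

definition y1 where
  "y1 a b lam \<theta> z = Ysol \<theta> z *
     integral {0..\<theta>} (\<lambda>s. Fc a b lam 1 s (rsol s z) / Ysol s z)"

definition y2 where
  "y2 a b lam \<theta> z = Ysol \<theta> z *
     integral {0..\<theta>} (\<lambda>s.
        (2 * Fc a b lam 2 s (rsol s z)
         + deriv (deriv (\<lambda>\<rho>. Fc a b lam 0 s \<rho>)) (rsol s z) * (y1 a b lam s z)^2
         + 2 * deriv (\<lambda>\<rho>. Fc a b lam 1 s \<rho>) (rsol s z) * y1 a b lam s z) / Ysol s z)"

definition f1 where "f1 a b lam z = y1 a b lam (2 * pi) z"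
definition f2 where "f2 a b lam z = y2 a b lam (2 * pi) z / 2"

definition Dom :: "real set" where "Dom = {0<..<3 powr (-1/3)}"

definition simple_zero :: "(real \<Rightarrow> real) \<Rightarrow> real \<Rightarrow> bool" where
  "simple_zero f z \<longleftrightarrow> f z = 0 \<and> (\<exists>d. (f has_real_derivative d) (at z) \<and> d \<noteq> 0)"

definition simple_zeros :: "(real \<Rightarrow> real) \<Rightarrow> real set" where
  "simple_zeros f = {z \<in> Dom. simple_zero f z}"

definition cond2 :: "(nat \<Rightarrow> nat \<Rightarrow> nat \<Rightarrow> real) \<Rightarrow> (nat \<Rightarrow> nat \<Rightarrow> nat \<Rightarrow> real) \<Rightarrow> (nat \<Rightarrow> real) \<Rightarrow> bool" where
  "cond2 a b lam \<longleftrightarrow> a 1 1 3 = b 1 0 4 \<and> a 1 3 1 = b 1 2 2 \<and> b 1 4 0 = 0 \<and> lam 1 = 0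
     \<and> a 1 2 2 = b 1 1 3 \<and> a 1 4 0 = b 1 3 1 \<and> a 1 0 4 = 0"

definition zs :: "real \<Rightarrow> real" where
  "zs s = ((1 - s^2) / (3 * (1 + s^2))) powr (1/3)"

definition Hpoly :: "(nat \<Rightarrow> nat \<Rightarrow> nat \<Rightarrow> real) \<Rightarrow> (nat \<Rightarrow> nat \<Rightarrow> nat \<Rightarrow> real) \<Rightarrow> (nat \<Rightarrow> real) \<Rightarrow> real \<Rightarrow> real" where
  "Hpoly a b lam s =
    (let H1 = 3*a 2 1 3 + a 2 3 1 - 3*b 2 0 4 - b 2 2 2 - 3*b 2 4 0 + 72*lam 2;
         H2 = -4*a 2 1 3 + 4*b 2 0 4 + 4*a 2 3 1 - 4*b 2 2 2 - 12*b 2 4 0 + 288*lam 2;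
         H3 = 5*a 2 1 3 - 9*a 2 3 1 - 5*b 2 0 4 + 9*b 2 2 2 - 5*b 2 4 0 + 504*lam 2;
         H4 = -8*a 2 1 3 + 8*a 2 3 1 + 8*b 2 0 4 - 8*b 2 2 2 + 40*b 2 4 0 + 576*lam 2
     in H1 * s ^ 6 + H2 * s ^ 5 + H3 * s ^ 4 + H4 * s ^ 3 + H3 * s ^ 2 + H2 * s + H1)"

end

theory Submission
  imports Defs "HOL-Computational_Algebra.Polynomial"
begin

lemma deriv_quot2:
  fixes n0 n1 n2 d0 d1 d2 :: real
  assumes d0: "d0 \<noteq> 0"
  shows "deriv (\<lambda>e. (n0 + n1*e + n2*e^2)/(d0 + d1*e + d2*e^2)) 0 = (n1*d0 - n0*d1)/d0^2"
    and "deriv (deriv (\<lambda>e. (n0 + n1*e + n2*e^2)/(d0 + d1*e + d2*e^2))) 0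
          = 2*((n2*d0 - n0*d2)*d0 - (n1*d0 - n0*d1)*d1)/d0^3"
proof -
  define N where "N = (\<lambda>e::real. n0 + n1*e + n2*e^2)"
  define D where "D = (\<lambda>e::real. d0 + d1*e + d2*e^2)"
  define g where "g = (\<lambda>e. ((n1 + 2*n2*e) * D e - N e * (d1 + 2*d2*e)) / (D e)^2)"
  define S where "S = {e. D e \<noteq> 0}"
  have openS: "open S" unfolding S_def D_def
    by (intro open_Collect_neq continuous_intros)
  have S0: "0 \<in> S" using d0 by (simp add: S_def D_def)
  have fd: "((\<lambda>e. N e / D e) has_real_derivative g e) (at e)" if "e \<in> S" for e
    using that unfolding S_def g_def N_def D_def
    by (auto intro!: derivative_eq_intros simp: power2_eq_square field_simps)
  have dd: "deriv (\<lambda>e. N e / D e) e = g e" if "e \<in> S" for e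
    using fd[OF that] by (rule DERIV_imp_deriv)
  show "deriv (\<lambda>e. (n0 + n1*e + n2*e^2)/(d0 + d1*e + d2*e^2)) 0 = (n1*d0 - n0*d1)/d0^2"
    using dd[OF S0] by (simp add: N_def D_def g_def)
  have gd: "(g has_real_derivative 2*((n2*d0 - n0*d2)*d0 - (n1*d0 - n0*d1)*d1)/d0^3) (at 0)"
  proof -
    have "(g has_real_derivative
       ((2*n2 * D 0 + (n1 + 2*n2*0) * (d1 + 2*d2*0) - ((n1 + 2*n2*0) * (d1 + 2*d2*0) + N 0 * (2*d2))) * (D 0)^2
        - ((n1 + 2*n2*0) * D 0 - N 0 * (d1 + 2*d2*0)) * (2 * D 0 * (d1 + 2*d2*0))) / ((D 0)^2)^2) (at 0)"
      unfolding g_def N_def D_def using d0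
      by (auto intro!: derivative_eq_intros simp: power2_eq_square)
    moreover have "((2*n2 * D 0 + (n1 + 2*n2*0) * (d1 + 2*d2*0) - ((n1 + 2*n2*0) * (d1 + 2*d2*0) + N 0 * (2*d2))) * (D 0)^2
        - ((n1 + 2*n2*0) * D 0 - N 0 * (d1 + 2*d2*0)) * (2 * D 0 * (d1 + 2*d2*0))) / ((D 0)^2)^2
        = 2*((n2*d0 - n0*d2)*d0 - (n1*d0 - n0*d1)*d1)/d0^3"
      using d0 by (simp add: N_def D_def field_simps power2_eq_square) (simp add: algebra_simps power3_eq_cube power4_eq_xxxx)
    ultimately show ?thesis by simp
  qed
  have "(deriv (\<lambda>e. N e / D e) has_real_derivative 2*((n2*d0 - n0*d2)*d0 - (n1*d0 - n0*d1)*d1)/d0^3) (at 0)"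
    using has_field_derivative_transform_within_open[OF gd openS S0] dd by simp
  then show "deriv (deriv (\<lambda>e. (n0 + n1*e + n2*e^2)/(d0 + d1*e + d2*e^2))) 0
          = 2*((n2*d0 - n0*d2)*d0 - (n1*d0 - n0*d1)*d1)/d0^3"
    by (simp add: N_def D_def DERIV_imp_deriv)
qed

definition Ahat :: "(nat \<Rightarrow> nat \<Rightarrow> nat \<Rightarrow> real) \<Rightarrow> nat \<Rightarrow> real \<Rightarrow> real" where
  "Ahat a k \<theta> = (\<Sum>i\<le>4. a k i (4 - i) * cos \<theta> ^ i * sin \<theta> ^ (4 - i))"

definition Qt where "Qt a b k \<theta> = cos \<theta> * Ahat a k \<theta> + sin \<theta> * Ahat b k \<theta>"
definition Tt where "Tt a b k \<theta> = cos \<theta> * (cos \<theta> * Ahat b k \<theta> - sin \<theta> * Ahat a k \<theta>)"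

lemma sum_hom4:
  fixes c :: "nat \<Rightarrow> real"
  shows "(\<Sum>i\<le>4. c i * (r*C)^i * (r* S)^(4-i)) = r^4 * (\<Sum>i\<le>4. c i * C^i * S^(4-i))"
  unfolding sum_distrib_left
proof (rule sum.cong[OF refl])
  fix i assume "i \<in> {..4::nat}"
  then have "r^i * r^(4-i) = r^4" by (simp add: power_add[symmetric])
  then show "c i * (r*C)^i * (r* S)^(4-i) = r^4 * (c i * C^i * S^(4-i))"
    by (simp add: power_mult_distrib algebra_simps)
qed

lemma drdtheta_quot:
  fixes a b :: "nat \<Rightarrow> nat \<Rightarrow> nat \<Rightarrow> real" and \<theta> r e :: real and lam :: "nat \<Rightarrow> real"
  defines "C \<equiv> cos \<theta>" and "S \<equiv> sin \<theta>"
  defines "p0 \<equiv> - (r* S) + (r*C) * ((r*C)^3 + (r*C)*(r* S)^2)"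
      and "q0 \<equiv> (r*C) + (r* S) * ((r*C)^3 + (r*C)*(r* S)^2)"
      and "p1 \<equiv> lam 1 * (r*C) + r^4 * Ahat a 1 \<theta>"
      and "q1 \<equiv> lam 1 * (r* S) + r^4 * Ahat b 1 \<theta>"
      and "p2 \<equiv> lam 2 * (r*C) + r^4 * Ahat a 2 \<theta>"
      and "q2 \<equiv> lam 2 * (r* S) + r^4 * Ahat b 2 \<theta>"
  shows "drdtheta a b lam e \<theta> r =
    (r*((r*C)*p0 + (r* S)*q0) + r*((r*C)*p1 + (r* S)*q1)*e + r*((r*C)*p2 + (r* S)*q2)*e^2)
    / (((r*C)*q0 - (r* S)*p0) + ((r*C)*q1 - (r* S)*p1)*e + ((r*C)*q2 - (r* S)*p2)*e^2)"
proof -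
  have P: "Pfield a lam e (r*C) (r* S) = p0 + e*p1 + e^2*p2"
    unfolding Pfield_def sum_hom4 unfolding p0_def p1_def p2_def Ahat_def C_def S_def
    by (simp add: algebra_simps)
  have Q: "Qfield b lam e (r*C) (r* S) = q0 + e*q1 + e^2*q2"
    unfolding Qfield_def sum_hom4 unfolding q0_def q1_def q2_def Ahat_def C_def S_def
    by (simp add: algebra_simps)
  show ?thesis unfolding drdtheta_def Let_def C_def[symmetric] S_def[symmetric] P Q
    by (simp add: algebra_simps)
qed

lemma g_simp: fixes r \<theta> :: real shows "(r*cos \<theta>)^3 + (r*cos \<theta>)*(r * sin \<theta>)^2 = r^3 * cos \<theta>"
proof -
  have s: "(sin \<theta>)^2 + (cos \<theta>)^2 = 1" by (rule sin_cos_squared_add)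
  show ?thesis using s by algebra
qed

lemma coefs:
  fixes r \<theta> l A B :: real
  shows "r*((r*cos \<theta>)*(- (r * sin \<theta>) + (r*cos \<theta>) * (r^3 * cos \<theta>)) + (r * sin \<theta>)*((r*cos \<theta>) + (r * sin \<theta>) * (r^3 * cos \<theta>))) = r^6 * cos \<theta>"
    and "(r*cos \<theta>)*((r*cos \<theta>) + (r * sin \<theta>) * (r^3 * cos \<theta>)) - (r * sin \<theta>)*(- (r * sin \<theta>) + (r*cos \<theta>) * (r^3 * cos \<theta>)) = r^2"
    and "r*((r*cos \<theta>)*(l * (r*cos \<theta>) + r^4 * A) + (r * sin \<theta>)*(l * (r * sin \<theta>) + r^4 * B)) = l*r^3 + r^6*(cos \<theta> * A + sin \<theta> * B)"
    and "(r*cos \<theta>)*(l * (r * sin \<theta>) + r^4 * B) - (r * sin \<theta>)*(l * (r*cos \<theta>) + r^4 * A) = r^5 * (cos \<theta> * B - sin \<theta> * A)"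
proof -
  have s: "(sin \<theta>)^2 + (cos \<theta>)^2 = 1" by (rule sin_cos_squared_add)
  show "r*((r*cos \<theta>)*(- (r * sin \<theta>) + (r*cos \<theta>) * (r^3 * cos \<theta>)) + (r * sin \<theta>)*((r*cos \<theta>) + (r * sin \<theta>) * (r^3 * cos \<theta>))) = r^6 * cos \<theta>"
    using s by algebra
  show "(r*cos \<theta>)*((r*cos \<theta>) + (r * sin \<theta>) * (r^3 * cos \<theta>)) - (r * sin \<theta>)*(- (r * sin \<theta>) + (r*cos \<theta>) * (r^3 * cos \<theta>)) = r^2"
    using s by algebra
  show "r*((r*cos \<theta>)*(l * (r*cos \<theta>) + r^4 * A) + (r * sin \<theta>)*(l * (r * sin \<theta>) + r^4 * B)) = l*r^3 + r^6*(cos \<theta> * A + sin \<theta> * B)"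
    using s by algebra
  show "(r*cos \<theta>)*(l * (r * sin \<theta>) + r^4 * B) - (r * sin \<theta>)*(l * (r*cos \<theta>) + r^4 * A) = r^5 * (cos \<theta> * B - sin \<theta> * A)"
    by algebra
qed

lemma drdtheta_quot':
  "drdtheta a b lam e \<theta> r =
    (r^6 * cos \<theta> + (lam 1*r^3 + r^6*Qt a b 1 \<theta>)*e + (lam 2*r^3 + r^6*Qt a b 2 \<theta>)*e^2)
    / (r^2 + (r^5 * (cos \<theta> * Ahat b 1 \<theta> - sin \<theta> * Ahat a 1 \<theta>))*e + (r^5 * (cos \<theta> * Ahat b 2 \<theta> - sin \<theta> * Ahat a 2 \<theta>))*e^2)"
  unfolding drdtheta_quot g_simp coefs Qt_def ..

lemma Fc0: "Fc a b lam 0 \<theta> r = r^4 * cos \<theta>"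
proof (cases "r = 0")
  case True then show ?thesis by (simp add: Fc_def drdtheta_def)
next
  case False
  then show ?thesis by (simp add: Fc_def drdtheta_quot' power2_eq_square eval_nat_numeral)
qed

lemma Fc1: "Fc a b lam 1 \<theta> r = lam 1 * r + r^4 * Qt a b 1 \<theta> - r^7 * Tt a b 1 \<theta>"
proof (cases "r = 0")
  case True then show ?thesis by (simp add: Fc_def drdtheta_def)
next
  case False
  have "Fc a b lam 1 \<theta> r = ((lam 1*r^3 + r^6*Qt a b 1 \<theta>) * r^2 - r^6 * cos \<theta> * (r^5 * (cos \<theta> * Ahat b 1 \<theta> - sin \<theta> * Ahat a 1 \<theta>)))/(r^2)^2"
    unfolding Fc_def drdtheta_quot' using False
    by (simp add: deriv_quot2(1))
  also have "\<dots> = lam 1 * r + r^4 * Qt a b 1 \<theta> - r^7 * Tt a b 1 \<theta>" using False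
    by (simp add: Tt_def divide_eq_eq) (simp add: power2_eq_square power_numeral_reduce algebra_simps)
  finally show ?thesis .
qed

lemma Fc2:
  assumes "cos \<theta> * Ahat b 1 \<theta> - sin \<theta> * Ahat a 1 \<theta> = 0"
  shows "Fc a b lam 2 \<theta> r = lam 2 * r + r^4 * Qt a b 2 \<theta> - r^7 * Tt a b 2 \<theta>"
proof (cases "r = 0")
  case True then show ?thesis by (simp add: Fc_def drdtheta_def numeral_2_eq_2)
next
  case False
  have "Fc a b lam 2 \<theta> r = deriv (deriv (\<lambda>e. (r^6 * cos \<theta> + (lam 1*r^3 + r^6*Qt a b 1 \<theta>)*e + (lam 2*r^3 + r^6*Qt a b 2 \<theta>)*e^2)
    / (r^2 + (r^5 * (cos \<theta> * Ahat b 1 \<theta> - sin \<theta> * Ahat a 1 \<theta>))*e + (r^5 * (cos \<theta> * Ahat b 2 \<theta> - sin \<theta> * Ahat a 2 \<theta>))*e^2))) 0 / 2"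
    unfolding Fc_def drdtheta_quot' by (simp only: numeral_2_eq_2 funpow.simps comp_def id_def fact_2) simp
  also have "\<dots> = (2*(((lam 2*r^3 + r^6*Qt a b 2 \<theta>)*r^2 - r^6 * cos \<theta> * (r^5 * (cos \<theta> * Ahat b 2 \<theta> - sin \<theta> * Ahat a 2 \<theta>)))*r^2 - ((lam 1*r^3 + r^6*Qt a b 1 \<theta>)*r^2 - r^6 * cos \<theta> * (r^5 * (cos \<theta> * Ahat b 1 \<theta> - sin \<theta> * Ahat a 1 \<theta>)))*(r^5 * (cos \<theta> * Ahat b 1 \<theta> - sin \<theta> * Ahat a 1 \<theta>)))/(r^2)^3) / 2"
    by (subst deriv_quot2(2)) (use False in auto)
  also have "\<dots> = lam 2 * r + r^4 * Qt a b 2 \<theta> - r^7 * Tt a b 2 \<theta>" using False assms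
    by (simp add: Tt_def divide_eq_eq) (simp add: power2_eq_square power_numeral_reduce algebra_simps)
  finally show ?thesis .
qed

lemma int_cos_h:
  assumes "continuous_on {-1..1} h"
  shows "((\<lambda>\<theta>. cos \<theta> * h (sin \<theta>)) has_integral 0) {0..2*pi}"
proof -
  define H where "H = (\<lambda>x. integral {-1..x} h)"
  have HD: "(H has_vector_derivative h x) (at x within {-1..1})" if "x \<in> {-1..1}" for x
    unfolding H_def using integral_has_vector_derivative[OF assms that] .
  have D: "((\<lambda>\<theta>. H (sin \<theta>)) has_vector_derivative cos \<theta> * h (sin \<theta>)) (at \<theta> within {0..2*pi})"
    if "\<theta> \<in> {0..2*pi}" for \<theta>
  proof -
    have s: "(sin has_vector_derivative cos \<theta>) (at \<theta> within {0..2*pi})"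
      using DERIV_sin[of \<theta>] by (simp add: has_real_derivative_iff_has_vector_derivative has_vector_derivative_at_within)
    have "(H has_vector_derivative h (sin \<theta>)) (at (sin \<theta>) within sin ` {0..2*pi})"
      by (rule has_vector_derivative_within_subset[OF HD]) auto
    from vector_diff_chain_within[OF s this] show ?thesis by (simp add: o_def)
  qed
  have "((\<lambda>\<theta>. cos \<theta> * h (sin \<theta>)) has_integral (H (sin (2*pi)) - H (sin 0))) {0..2*pi}"
    by (rule fundamental_theorem_of_calculus) (use D in auto)
  then show ?thesis by simp
qed

lemma int_sin_h:
  assumes "continuous_on {-1..1} h"
  shows "((\<lambda>\<theta>. sin \<theta> * h (cos \<theta>)) has_integral 0) {0..2*pi}"
proof -
  define H where "H = (\<lambda>x. integral {-1..x} h)"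
  have HD: "(H has_vector_derivative h x) (at x within {-1..1})" if "x \<in> {-1..1}" for x
    unfolding H_def using integral_has_vector_derivative[OF assms that] .
  have D: "((\<lambda>\<theta>. - H (cos \<theta>)) has_vector_derivative sin \<theta> * h (cos \<theta>)) (at \<theta> within {0..2*pi})"
    if "\<theta> \<in> {0..2*pi}" for \<theta>
  proof -
    have s: "(cos has_vector_derivative - sin \<theta>) (at \<theta> within {0..2*pi})"
      using DERIV_cos[of \<theta>] by (simp add: has_real_derivative_iff_has_vector_derivative has_vector_derivative_at_within)
    have "(H has_vector_derivative h (cos \<theta>)) (at (cos \<theta>) within cos ` {0..2*pi})"
      by (rule has_vector_derivative_within_subset[OF HD]) auto
    from has_vector_derivative_minus[OF vector_diff_chain_within[OF s this]] show ?thesis by (simp add: o_def)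
  qed
  have "((\<lambda>\<theta>. sin \<theta> * h (cos \<theta>)) has_integral (- H (cos (2*pi)) - - H (cos 0))) {0..2*pi}"
    by (rule fundamental_theorem_of_calculus) (use D in auto)
  then show ?thesis by simp
qed

lemma int_sin2: "((\<lambda>\<theta>. sin \<theta> ^ 2) has_integral pi) {0..2*pi}"
proof -
  have D: "((\<lambda>\<theta>. (\<theta> - sin \<theta> * cos \<theta>)/2) has_vector_derivative sin \<theta> ^ 2) (at \<theta> within {0..2*pi})" for \<theta>
  proof -
    have "((\<lambda>\<theta>. (\<theta> - sin \<theta> * cos \<theta>)/2) has_real_derivative (1 - (cos \<theta> * cos \<theta> + sin \<theta> * - sin \<theta>))/2) (at \<theta>)"
      by (auto intro!: derivative_eq_intros)
    moreover have "(1 - (cos \<theta> * cos \<theta> + sin \<theta> * - sin \<theta>))/2 = sin \<theta> ^ 2"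
      using sin_cos_squared_add[of \<theta>] by (simp add: power2_eq_square algebra_simps)
    ultimately show ?thesis
      by (simp add: has_real_derivative_iff_has_vector_derivative has_vector_derivative_at_within)
  qed
  have "((\<lambda>\<theta>. sin \<theta> ^ 2) has_integral ((2*pi - sin (2*pi) * cos (2*pi))/2 - (0 - sin 0 * cos 0)/2)) {0..2*pi}"
    by (rule fundamental_theorem_of_calculus) (use D in auto)
  then show ?thesis by simp
qed

lemma int_sin4: "((\<lambda>\<theta>. sin \<theta> ^ 4) has_integral 3*pi/4) {0..2*pi}"
proof -
  define F where "F = (\<lambda>\<theta>::real. 3*\<theta>/8 - 3* sin \<theta>*cos \<theta>/8 - sin \<theta>^3*cos \<theta>/4)"
  have D: "(F has_vector_derivative sin \<theta> ^ 4) (at \<theta> within {0..2*pi})" for \<theta>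
  proof -
    have s: "sin \<theta>^2 + cos \<theta>^2 = 1" by (rule sin_cos_squared_add)
    have "(F has_real_derivative sin \<theta> ^ 4) (at \<theta>)"
      unfolding F_def by (auto intro!: derivative_eq_intros) (insert s, algebra)
    then show ?thesis
      by (simp add: has_real_derivative_iff_has_vector_derivative has_vector_derivative_at_within)
  qed
  have "((\<lambda>\<theta>. sin \<theta> ^ 4) has_integral (F (2*pi) - F 0)) {0..2*pi}"
    by (rule fundamental_theorem_of_calculus) (use D in auto)
  then show ?thesis by (simp add: F_def)
qed

lemma arctan_alg:
  fixes s c k w \<beta> :: real
  assumes "s^2 + c^2 = 1" "w^2 = 1 - k^2" "w > 0" "\<beta> * (1 + w) = -k" "1 + \<beta>* s > 0" "1 - k* s \<noteq> 0"
  shows "(1 + 2 * ((- (\<beta>* s*(1+\<beta>* s)) - \<beta>*c*(\<beta>*c)) / (1+\<beta>* s)^2 / (1 + (\<beta>*c/(1+\<beta>* s))^2))) / w = 1/(1-k* s)"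
proof -
  have pos: "1 + 2*\<beta>* s + \<beta>^2 > 0"
  proof -
    have "1 + 2*\<beta>* s + \<beta>^2 = (1+\<beta>* s)^2 + \<beta>^2*c^2" using assms(1) by algebra
    also have "\<dots> > 0" using assms(5) by (intro add_pos_nonneg) auto
    finally show ?thesis .
  qed
  have e0: "(1+\<beta>* s)^2 + (\<beta>*c)^2 = 1 + 2*\<beta>* s + \<beta>^2" using assms(1) by algebra
  have e1: "1 + (\<beta>*c/(1+\<beta>* s))^2 = (1 + 2*\<beta>* s + \<beta>^2)/(1+\<beta>* s)^2"
    using assms(5) e0 by (simp add: field_simps power_divide power_mult_distrib)
  have e2: "(- (\<beta>* s*(1+\<beta>* s)) - \<beta>*c*(\<beta>*c)) = - \<beta>*(s+\<beta>)"
    using assms(1) by algebra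
  have "(1 + 2 * ((- (\<beta>* s*(1+\<beta>* s)) - \<beta>*c*(\<beta>*c)) / (1+\<beta>* s)^2 / (1 + (\<beta>*c/(1+\<beta>* s))^2)))
       = (1 - \<beta>^2)/(1 + 2*\<beta>* s + \<beta>^2)"
  proof -
    have d: "(1+\<beta>* s)^2 \<noteq> 0" using assms(5) by simp
    have e3: "- \<beta>*(s+\<beta>) / (1+\<beta>* s)^2 / ((1 + 2*\<beta>* s + \<beta>^2)/(1+\<beta>* s)^2) = - \<beta>*(s+\<beta>)/(1 + 2*\<beta>* s + \<beta>^2)"
    proof -
      have g: "\<And>x D P. D \<noteq> 0 \<Longrightarrow> x/D/(P/D) = x/(P::real)" by (simp add: divide_divide_eq_right)
      show ?thesis by (rule g[OF d])
    qed
    have e4: "1 + 2 * (- \<beta>*(s+\<beta>)/(1 + 2*\<beta>* s + \<beta>^2)) = (1 - \<beta>^2)/(1 + 2*\<beta>* s + \<beta>^2)"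
      using pos by (simp add: field_simps) algebra
    show ?thesis unfolding e1 e2 e3 e4 ..
  qed
  also have "\<dots> = w/(1-k* s)"
  proof -
    have "(1 - \<beta>^2)*(1-k* s) = w*(1 + 2*\<beta>* s + \<beta>^2)"
    proof -
      have w1: "1 + w \<noteq> 0" using assms(3) by simp
      have "((1 - \<beta>^2)*(1-k* s) - w*(1 + 2*\<beta>* s + \<beta>^2)) * (1+w)^2 = 0"
        using assms(2,4) by algebra
      then show ?thesis using w1 by simp
    qed
    then show ?thesis using pos assms(6) by (simp add: field_simps)
  qed
  finally show ?thesis using assms(3,6) by (simp add: field_simps)
qed

lemma int_inv:
  fixes k :: real
  assumes k: "0 < k" "k < 1"
  shows "((\<lambda>\<theta>. 1/(1 - k * sin \<theta>)) has_integral 2*pi/sqrt(1-k^2)) {0..2*pi}"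
proof -
  define w where "w = sqrt(1-k^2)"
  have w0: "w > 0" unfolding w_def using k by (simp add: power_less_one_iff abs_less_iff)
  have w2: "w^2 = 1 - k^2" unfolding w_def using k by (simp add: abs_le_iff power_le_one)
  define \<beta> where "\<beta> = -k/(1+w)"
  have b1: "\<beta> * (1+w) = -k" unfolding \<beta>_def using w0 by simp
  have babs: "\<bar>\<beta>\<bar> < 1" unfolding \<beta>_def using w0 k by (simp add: abs_div_pos)
  have bs: "1 + \<beta> * sin \<theta> > 0" for \<theta>
  proof -
    have "\<bar>\<beta> * sin \<theta>\<bar> \<le> \<bar>\<beta>\<bar>" using abs_sin_le_one[of \<theta>] by (simp add: abs_mult mult_left_le)
    then show ?thesis using babs by linarith
  qed
  have ks: "1 - k * sin \<theta> \<noteq> 0" for \<theta>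
  proof -
    have "\<bar>k * sin \<theta>\<bar> \<le> k" using abs_sin_le_one[of \<theta>] k by (simp add: abs_mult mult_left_le)
    then show ?thesis using k by linarith
  qed
  define J where "J = (\<lambda>\<theta>. (\<theta> + 2 * arctan (\<beta> * cos \<theta> / (1 + \<beta> * sin \<theta>))) / w)"
  have D: "(J has_vector_derivative 1/(1 - k * sin \<theta>)) (at \<theta> within {0..2*pi})" for \<theta>
  proof -
    have AA: "(1 + 2 * ((- (\<beta>* sin \<theta>*(1+\<beta>* sin \<theta>)) - \<beta>*cos \<theta>*(\<beta>*cos \<theta>)) / (1+\<beta>* sin \<theta>)^2 / (1 + (\<beta>*cos \<theta>/(1+\<beta>* sin \<theta>))^2))) / w = 1/(1 - k * sin \<theta>)"
      by (rule arctan_alg[OF sin_cos_squared_add w2 w0 b1 bs ks])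
    have "(J has_real_derivative 1/(1 - k * sin \<theta>)) (at \<theta>)"
      unfolding J_def
      apply (rule derivative_eq_intros refl)+
      using bs[of \<theta>] apply simp
      apply (rule derivative_eq_intros refl)+
      using w0 apply simp
      apply (subst AA[symmetric])
      using w0 bs[of \<theta>] apply (simp add: power2_eq_square divide_simps)
      done
    then show ?thesis
      by (simp add: has_real_derivative_iff_has_vector_derivative has_vector_derivative_at_within)
  qed
  have "((\<lambda>\<theta>. 1/(1 - k * sin \<theta>)) has_integral (J (2*pi) - J 0)) {0..2*pi}"
    by (rule fundamental_theorem_of_calculus) (use D in auto)
  moreover have "J (2*pi) - J 0 = 2*pi/sqrt(1-k^2)" unfolding J_def w_def by (simp add: diff_divide_distrib[symmetric])
  ultimately show ?thesis by simp
qed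

lemma sum4: "(\<Sum>i\<le>4::nat. f i) = f 0 + f 1 + f 2 + f 3 + (f 4::real)"
  by (simp add: eval_nat_numeral atMost_Suc add_ac)

lemma Ahat_expand: "Ahat a m \<theta> = a m 0 4 * sin \<theta>^4 + a m 1 3 * cos \<theta> * sin \<theta>^3 + a m 2 2 * cos \<theta>^2 * sin \<theta>^2
   + a m 3 1 * cos \<theta>^3 * sin \<theta> + a m 4 0 * cos \<theta>^4"
  unfolding Ahat_def sum4 by simp

lemma Tt_decomp:
  fixes \<theta> :: real
  defines "s \<equiv> sin \<theta>" and "c \<equiv> cos \<theta>"
  shows "Tt a b m \<theta> = c * ((- a m 0 4) * s^5 + (b m 1 3 - a m 2 2)*(1-s^2)* s^3 + (b m 3 1 - a m 4 0)*(1-s^2)^2* s)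
     + ((b m 0 4 - a m 1 3)*(1-s^2)* s^4 + (b m 2 2 - a m 3 1)*(1-s^2)^2* s^2 + b m 4 0*(1-s^2)^3)"
proof -
  have e: "s^2 + c^2 = 1" unfolding s_def c_def by (rule sin_cos_squared_add)
  show ?thesis unfolding Tt_def Ahat_expand s_def[symmetric] c_def[symmetric] using e by algebra
qed

lemma Qt_decomp:
  fixes \<theta> :: real
  defines "s \<equiv> sin \<theta>" and "c \<equiv> cos \<theta>"
  shows "Qt a b m \<theta> = c * ((a m 0 4 + b m 1 3)* s^4 + (a m 2 2 + b m 3 1)*(1-s^2)* s^2 + a m 4 0*(1-s^2)^2)
     + s * (b m 0 4 * (1-c^2)^2 + (a m 1 3 + b m 2 2)*c^2*(1-c^2) + (a m 3 1 + b m 4 0)*c^4)"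
proof -
  have e: "s^2 + c^2 = 1" unfolding s_def c_def by (rule sin_cos_squared_add)
  show ?thesis unfolding Qt_def Ahat_expand s_def[symmetric] c_def[symmetric] using e by algebra
qed

lemma poly_div:
  fixes k x B0 B1 B2 :: real
  assumes "k \<noteq> 0"
  defines "e0 \<equiv> B0" and "e2 \<equiv> -3*B0 + B1" and "e4 \<equiv> 3*B0 - 2*B1 + B2" and "e6 \<equiv> -B0 + B1 - B2"
  defines "\<rho> \<equiv> e0 + e2/k^2 + e4/k^4 + e6/k^6"
  defines "R0 \<equiv> e0 - \<rho>"
  defines "R2 \<equiv> e2 + k^2*R0"
  defines "R4 \<equiv> e4 + k^2*e2 + k^4*R0"
  shows "B2*(1-x^2)*x^4 + B1*(1-x^2)^2*x^2 + B0*(1-x^2)^3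
       = (1 - k*x) * (R0 + k*R0*x + R2*x^2 + k*R2*x^3 + R4*x^4 + k*R4*x^5) + \<rho>"
  using assms(1) unfolding \<rho>_def R0_def R2_def R4_def e0_def e2_def e4_def e6_def
  by (simp add: field_simps) algebra

lemma ks_ne: fixes k :: real assumes "0 < k" "k < 1" "x \<in> {-1..1}" shows "1 - k*x \<noteq> 0"
proof -
  have "\<bar>k*x\<bar> \<le> k" using assms by (simp add: abs_mult mult_left_le abs_le_iff)
  then show ?thesis using assms by linarith
qed

lemma int_T:
  fixes k :: real and a b :: "nat \<Rightarrow> nat \<Rightarrow> nat \<Rightarrow> real" and m :: nat
  assumes k: "0 < k" "k < 1"
  defines "B0 \<equiv> b m 4 0" and "B1 \<equiv> b m 2 2 - a m 3 1" and "B2 \<equiv> b m 0 4 - a m 1 3"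
  defines "e0 \<equiv> B0" and "e2 \<equiv> -3*B0 + B1" and "e4 \<equiv> 3*B0 - 2*B1 + B2" and "e6 \<equiv> -B0 + B1 - B2"
  defines "\<rho> \<equiv> e0 + e2/k^2 + e4/k^4 + e6/k^6"
  defines "R0 \<equiv> e0 - \<rho>"
  defines "R2 \<equiv> e2 + k^2*R0"
  defines "R4 \<equiv> e4 + k^2*e2 + k^4*R0"
  shows "((\<lambda>\<theta>. Tt a b m \<theta> / (1 - k * sin \<theta>)) has_integral
           (R0*(2*pi) + R2*pi + R4*(3*pi/4) + \<rho>*(2*pi/sqrt(1-k^2)))) {0..2*pi}"
proof -
  define P3 where "P3 = (\<lambda>x::real. (- a m 0 4) * x^5 + (b m 1 3 - a m 2 2)*(1-x^2)*x^3 + (b m 3 1 - a m 4 0)*(1-x^2)^2*x)"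
  define h3 where "h3 = (\<lambda>x. P3 x / (1 - k*x))"
  define h4 where "h4 = (\<lambda>y::real. k*R0 + k*R2*(1-y^2) + k*R4*(1-y^2)^2)"
  have pd: "B2*(1-x^2)*x^4 + B1*(1-x^2)^2*x^2 + B0*(1-x^2)^3
       = (1 - k*x) * (R0 + k*R0*x + R2*x^2 + k*R2*x^3 + R4*x^4 + k*R4*x^5) + \<rho>" for x
    unfolding \<rho>_def R0_def R2_def R4_def e0_def e2_def e4_def e6_def
    by (rule poly_div) (use k in simp)
  have pw: "Tt a b m \<theta> / (1 - k * sin \<theta>) =
      cos \<theta> * h3 (sin \<theta>) + sin \<theta> * h4 (cos \<theta>) + (R0 + (R2 * sin \<theta>^2 + (R4 * sin \<theta>^4 + \<rho> * (1/(1 - k * sin \<theta>)))))" for \<theta>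
  proof -
    have ne: "1 - k * sin \<theta> \<noteq> 0" by (rule ks_ne) (use k in auto)
    have e: "sin \<theta>^2 + cos \<theta>^2 = 1" by (rule sin_cos_squared_add)
    have T: "Tt a b m \<theta> = cos \<theta> * P3 (sin \<theta>) + ((1 - k* sin \<theta>) * (R0 + k*R0* sin \<theta> + R2* sin \<theta>^2 + k*R2* sin \<theta>^3 + R4* sin \<theta>^4 + k*R4* sin \<theta>^5) + \<rho>)"
      unfolding Tt_decomp P3_def pd[symmetric] B0_def B1_def B2_def by simp
    have R: "R0 + k*R0* sin \<theta> + R2* sin \<theta>^2 + k*R2* sin \<theta>^3 + R4* sin \<theta>^4 + k*R4* sin \<theta>^5
       = sin \<theta> * h4 (cos \<theta>) + (R0 + (R2 * sin \<theta>^2 + R4 * sin \<theta>^4))"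
      unfolding h4_def using e by algebra
    have g: "\<And>X U V r. U \<noteq> 0 \<Longrightarrow> (X + (U*V + r))/U = X/U + V + r*(1/(U::real))"
      by (simp add: field_simps)
    show ?thesis unfolding T h3_def g[OF ne] R by simp
  qed
  have c3: "continuous_on {-1..1} h3" unfolding h3_def P3_def
    by (intro continuous_intros) (use ks_ne[OF k] in auto)
  have c4: "continuous_on {-1..1} h4" unfolding h4_def by (intro continuous_intros)
  have I: "((\<lambda>\<theta>. cos \<theta> * h3 (sin \<theta>) + sin \<theta> * h4 (cos \<theta>) + (R0 + (R2 * sin \<theta>^2 + (R4 * sin \<theta>^4 + \<rho> * (1/(1 - k * sin \<theta>))))))
      has_integral (0 + 0 + (R0*(2*pi) + (R2*pi + (R4*(3*pi/4) + \<rho>*(2*pi/sqrt(1-k^2))))))) {0..2*pi}"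
    apply (intro has_integral_add int_cos_h[OF c3] int_sin_h[OF c4] has_integral_mult_right int_sin2 int_sin4 int_inv[OF k])
    using has_integral_const_real[of R0 0 "2*pi"] by (simp add: mult.commute)
  show ?thesis using has_integral_eq[OF _ I, of "\<lambda>\<theta>. Tt a b m \<theta> / (1 - k * sin \<theta>)"] pw
    by (simp add: algebra_simps)
qed

lemma int_Q: "((\<lambda>\<theta>. Qt a b m \<theta>) has_integral 0) {0..2*pi}"
proof -
  have I: "((\<lambda>\<theta>. cos \<theta> * ((\<lambda>x. (a m 0 4 + b m 1 3)*x^4 + (a m 2 2 + b m 3 1)*(1-x^2)*x^2 + a m 4 0*(1-x^2)^2) (sin \<theta>))
     + sin \<theta> * ((\<lambda>y. b m 0 4 * (1-y^2)^2 + (a m 1 3 + b m 2 2)*y^2*(1-y^2) + (a m 3 1 + b m 4 0)*y^4) (cos \<theta>))) has_integral (0+0)) {0..2*pi}"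
    by (intro has_integral_add int_cos_h int_sin_h continuous_intros)
  then show ?thesis by (simp add: Qt_decomp)
qed

lemma int_u: "((\<lambda>\<theta>. 1 - k * sin \<theta>) has_integral 2*pi) {0..2*pi}"
proof -
  have I: "((\<lambda>\<theta>. 1 - k * (sin \<theta> * (\<lambda>y. 1) (cos \<theta>))) has_integral (2*pi - k*0)) {0..2*pi}"
    apply (intro has_integral_diff has_integral_mult_right int_sin_h continuous_intros)
    using has_integral_const_real[of "1::real" 0 "2*pi"] by (simp add: real_scaleR_def)
  then show ?thesis by simp
qed

definition Np :: "real \<Rightarrow> real \<Rightarrow> real \<Rightarrow> real \<Rightarrow> real \<Rightarrow> real" where
  "Np L B0 B1 B2 t =
    (let H1 = 72*L - 3*B0 - B1 - 3*B2; H2 = 288*L - 12*B0 - 4*B1 + 4*B2;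
         H3 = 504*L - 5*B0 + 9*B1 - 5*B2; H4 = 576*L + 40*B0 - 8*B1 + 8*B2
     in H1 * t ^ 6 + H2 * t ^ 5 + H3 * t ^ 4 + H4 * t ^ 3 + H3 * t ^ 2 + H2 * t + H1)"

definition Q3 :: "real \<Rightarrow> real \<Rightarrow> real \<Rightarrow> real \<Rightarrow> real \<Rightarrow> real" where
  "Q3 L B0 B1 B2 W =
    (let H1 = 72*L - 3*B0 - B1 - 3*B2; H2 = 288*L - 12*B0 - 4*B1 + 4*B2;
         H3 = 504*L - 5*B0 + 9*B1 - 5*B2; H4 = 576*L + 40*B0 - 8*B1 + 8*B2
     in H1 * (W^3 - 3*W) + H2 * (W^2 - 2) + H3 * W + H4)"

lemma closed_kw:
  fixes k w L B0 B1 B2 :: real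
  assumes k: "0 < k" and w: "0 < w" and kw: "w^2 = 1 - k^2"
  defines "e0 \<equiv> B0" and "e2 \<equiv> -3*B0 + B1" and "e4 \<equiv> 3*B0 - 2*B1 + B2" and "e6 \<equiv> -B0 + B1 - B2"
  defines "\<rho> \<equiv> e0 + e2/k^2 + e4/k^4 + e6/k^6"
  defines "R0 \<equiv> e0 - \<rho>"
  defines "R2 \<equiv> e2 + k^2*R0"
  defines "R4 \<equiv> e4 + k^2*e2 + k^4*R0"
  shows "2*L - k^2/9 * (2*R0 + R2 + R4*(3/4) + \<rho>*(2/w)) = w^3 * Q3 L B0 B1 B2 (2/w) * (1-w)^2/(288*k^4)"
proof -
  have "(2*L - k^2/9 * (2*R0 + R2 + R4*(3/4) + \<rho>*(2/w))) * (288*k^4*w^3) = (w^3 * Q3 L B0 B1 B2 (2/w) * (1-w)^2/(288*k^4)) * (288*k^4*w^3)"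
    unfolding R4_def R2_def R0_def \<rho>_def e0_def e2_def e4_def e6_def Q3_def Let_def
    using k w apply (simp add: field_simps)
    using kw by algebra
  moreover have c: "288*k^4*w^3 \<noteq> 0" using k w by simp
  ultimately show ?thesis by (simp only: mult_right_cancel[OF c])
qed

lemma Np_Q3: "0 < t \<Longrightarrow> Np L B0 B1 B2 t = t^3 * Q3 L B0 B1 B2 (t + 1/t)"
  unfolding Np_def Q3_def Let_def by (simp add: field_simps) (simp add: algebra_simps power2_eq_square power3_eq_cube eval_nat_numeral)

definition Tz :: "real \<Rightarrow> real" where "Tz z = sqrt((1 - 3*z^3)/(1 + 3*z^3))"

definition Phi :: "real \<Rightarrow> real \<Rightarrow> real \<Rightarrow> real \<Rightarrow> real \<Rightarrow> real" where
  "Phi L B0 B1 B2 z = pi * z * Np L B0 B1 B2 (Tz z) / (36*(1 + Tz z)^4*(1 + (Tz z)^2))"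

lemma kw_aux: fixes t p :: real assumes "p = 1 + t^2" "p \<noteq> 0"
  shows "(2*t/p)^2 = 1 - ((1-t^2)/p)^2"
  using assms(2) apply (simp add: field_simps power2_eq_square) using assms(1) by algebra

lemma omw_aux: fixes t p :: real assumes "p = 1 + t^2" "p \<noteq> 0"
  shows "1 - 2*t/p = (1-t)^2/p"
  using assms(2) apply (simp add: field_simps power2_eq_square) using assms(1) by algebra

lemma X_aux: fixes t p m n :: real assumes "p \<noteq> 0" "m \<noteq> 0" "n \<noteq> 0"
  shows "(2*t/p)^3 * (m^2/p)^2/(288*((m*n)/p)^4) = t^3/(36*n^4*p)"
  using assms by (simp add: field_simps power_divide power_mult_distrib) (simp add: power_numeral_reduce algebra_simps)

lemma t2_aux: fixes t k :: real assumes "t^2 = (1-k)/(1+k)" "1+k \<noteq> 0"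
  shows "(2*t/(1+t^2))^2 = 1 - k^2"
proof -
  have p: "1 + t^2 = 2/(1+k)" unfolding assms(1) using assms(2) by (simp add: field_simps)
  have "(2*t/(1+t^2))^2 = 4*t^2/(1+t^2)^2" by (simp add: power_divide power_mult_distrib)
  also have "\<dots> = 1 - k^2" unfolding p unfolding assms(1) using assms(2) by (simp add: field_simps power2_eq_square)
  finally show ?thesis .
qed

lemma Tz_props:
  fixes z :: real
  assumes "0 < z" "3*z^3 < 1"
  defines "t \<equiv> Tz z"
  shows "0 < t" "t < 1" "3*z^3 = (1-t^2)/(1+t^2)" "sqrt(1-(3*z^3)^2) = 2*t/(1+t^2)"
proof -
  define k where "k = 3*z^3"
  have k: "0 < k" "k < 1" using assms by (auto simp: k_def)
  have t2: "t^2 = (1-k)/(1+k)" unfolding t_def Tz_def k_def[symmetric] using k by simp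
  show "0 < t" unfolding t_def Tz_def k_def[symmetric] using k by (simp add: divide_pos_pos)
  have "t^2 < 1" unfolding t2 using k by simp
  then show "t < 1" using \<open>0 < t\<close> by (simp add: power_less_one_iff)
  show "3*z^3 = (1-t^2)/(1+t^2)" unfolding k_def[symmetric] t2 using k by (simp add: field_simps)
  have "(2*t/(1+t^2))^2 = 1 - k^2"
    by (rule t2_aux[OF t2]) (use k in simp)
  moreover have "2*t/(1+t^2) \<ge> 0" using \<open>0 < t\<close> by simp
  ultimately show "sqrt(1-(3*z^3)^2) = 2*t/(1+t^2)" unfolding k_def[symmetric]
    by (metis real_sqrt_abs abs_of_nonneg)
qed

lemma Kform:
  fixes z L B0 B1 B2 :: real
  assumes z: "0 < z" "3*z^3 < 1"
  defines "k \<equiv> 3*z^3"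
  defines "e0 \<equiv> B0" and "e2 \<equiv> -3*B0 + B1" and "e4 \<equiv> 3*B0 - 2*B1 + B2" and "e6 \<equiv> -B0 + B1 - B2"
  defines "\<rho> \<equiv> e0 + e2/k^2 + e4/k^4 + e6/k^6"
  defines "R0 \<equiv> e0 - \<rho>"
  defines "R2 \<equiv> e2 + k^2*R0"
  defines "R4 \<equiv> e4 + k^2*e2 + k^4*R0"
  shows "2*pi*L*z + z^4*0 - z^7*(R0*(2*pi) + R2*pi + R4*(3*pi/4) + \<rho>*(2*pi/sqrt(1-k^2))) = Phi L B0 B1 B2 z"
proof -
  define t where "t = Tz z"
  define w where "w = sqrt(1-k^2)"
  have t: "0 < t" "t < 1" using Tz_props[OF z] by (auto simp: t_def)
  have hk: "k = (1-t^2)/(1+t^2)" using Tz_props[OF z] by (simp add: t_def k_def)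
  have hw: "w = 2*t/(1+t^2)" using Tz_props[OF z] by (simp add: t_def w_def k_def)
  have k0: "0 < k" using z by (simp add: k_def)
  have w0: "0 < w" using t unfolding hw by (intro divide_pos_pos) (auto intro: add_pos_nonneg)
  have kw: "w^2 = 1 - k^2" unfolding hw hk by (rule kw_aux) (auto simp: add_nonneg_eq_0_iff)
  have z6: "z^6 = k^2/9" by (simp add: k_def power_mult_distrib flip: power_mult)
  have "2*pi*L*z + z^4*0 - z^7*(R0*(2*pi) + R2*pi + R4*(3*pi/4) + \<rho>*(2*pi/w))
      = pi*z*(2*L - k^2/9 * (2*R0 + R2 + R4*(3/4) + \<rho>*(2/w)))"
    by (simp add: z6[symmetric] algebra_simps) (simp add: power_numeral_reduce)
  also have "\<dots> = pi*z*(w^3 * Q3 L B0 B1 B2 (2/w) * (1-w)^2/(288*k^4))"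
    unfolding R4_def R2_def R0_def \<rho>_def e0_def e2_def e4_def e6_def
    by (subst closed_kw[OF k0 w0 kw]) simp
  also have "\<dots> = Phi L B0 B1 B2 z"
  proof -
    have W: "2/w = t + 1/t" unfolding hw using t by (simp add: field_simps power2_eq_square)
    have X: "w^3 * (1-w)^2/(288*k^4) = t^3/(36*(1+t)^4*(1+t^2))"
    proof -
      have q: "1 - t^2 = (1-t)*(1+t)" by algebra
      have omw: "1 - w = (1-t)^2/(1+t^2)" unfolding hw by (rule omw_aux) (auto simp: add_nonneg_eq_0_iff)
      show ?thesis unfolding omw unfolding hk hw q
        by (rule X_aux) (use t in \<open>auto simp: add_nonneg_eq_0_iff\<close>)
    qed
    have "pi*z*(w^3 * Q3 L B0 B1 B2 (2/w) * (1-w)^2/(288*k^4)) = pi*z*(Q3 L B0 B1 B2 (t+1/t) * (w^3 * (1-w)^2/(288*k^4)))"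
      unfolding W by simp
    also have "\<dots> = pi*z*Np L B0 B1 B2 t/(36*(1+t)^4*(1+t^2))"
      unfolding X Np_Q3[OF t(1)] by simp
    finally show ?thesis unfolding Phi_def t_def .
  qed
  finally show ?thesis unfolding w_def .
qed

lemma powr_facts:
  fixes u :: real assumes "0 < u"
  shows "u powr (-1/3) = 1/(u powr (1/3))" "u powr (-4/3) = 1/(u powr (1/3))^4" "(u powr (1/3))^3 = u"
    "u powr (1/3) > 0"
proof -
  show "u powr (-1/3) = 1/(u powr (1/3))" using powr_minus_divide[of u "1/3"] by simp
  have "(u powr (1/3))^4 = u powr (4/3)" using assms by (simp add: powr_power)
  then show "u powr (-4/3) = 1/(u powr (1/3))^4" using powr_minus_divide[of u "4/3"] by simp
  show "(u powr (1/3))^3 = u" using assms by (simp add: powr_power)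
  show "u powr (1/3) > 0" using assms by simp
qed

lemma Dom_iff: "z \<in> Dom \<longleftrightarrow> 0 < z \<and> 3*z^3 < 1"
proof -
  define c :: real where "c = 3 powr (-1/3)"
  have c0: "0 < c" unfolding c_def by simp
  have c3: "c^3 = 1/3" unfolding c_def using powr_facts(1,3)[of 3] by (simp add: power_one_over)
  have "z < c \<longleftrightarrow> z^3 < c^3" if "0 < z" for z
    using that c0 by (meson less_imp_le power_less_imp_less_base power_strict_mono zero_less_numeral)
  then show ?thesis unfolding Dom_def c_def[symmetric] using c3 by auto
qed

lemma u_pos: fixes z :: real assumes "0 < z" "3*z^3 < 1" shows "0 < 1 - 3*z^3 * sin \<theta>"
proof -
  have "1 - 3*z^3 * sin \<theta> \<noteq> 0" by (rule ks_ne) (use assms in auto)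
  moreover have "3*z^3 * sin \<theta> \<le> 3*z^3" using assms by (simp add: mult_left_le)
  ultimately show ?thesis using assms by linarith
qed

lemma integrand1:
  assumes z: "0 < z" "3*z^3 < 1"
  shows "Fc a b lam 1 \<theta> (rsol \<theta> z) / Ysol \<theta> z =
     lam 1 * z * (1 - 3*z^3 * sin \<theta>) + z^4 * Qt a b 1 \<theta> - z^7 * (Tt a b 1 \<theta> / (1 - 3*z^3 * sin \<theta>))"
proof -
  define u where "u = 1 - 3*z^3 * sin \<theta>"
  define v where "v = u powr (1/3)"
  have u: "0 < u" unfolding u_def by (rule u_pos[OF z])
  note pf = powr_facts[OF u, folded v_def]
  have r: "rsol \<theta> z = z / v" unfolding rsol_def u_def[symmetric] pf by simp
  have Y: "Ysol \<theta> z = 1/v^4" unfolding Ysol_def u_def[symmetric] pf by simp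
  show ?thesis unfolding Fc1 r Y u_def[symmetric] pf(3)[symmetric] using pf(4)
    by (simp add: field_simps) (simp add: power_numeral_reduce algebra_simps)
qed

lemma f1_eq:
  assumes z: "0 < z" "3*z^3 < 1"
  shows "f1 a b lam z = Phi (lam 1) (b 1 4 0) (b 1 2 2 - a 1 3 1) (b 1 0 4 - a 1 1 3) z"
proof -
  define k where "k = 3*z^3"
  have k: "0 < k" "k < 1" using z by (auto simp: k_def)
  note I = has_integral_diff[OF has_integral_add[OF has_integral_mult_right[OF int_u[where k=k], where c="lam 1 * z"]
     has_integral_mult_right[OF int_Q[where a=a and b=b and m=1], where c="z^4"]]
     has_integral_mult_right[OF int_T[OF k, where a=a and b=b and m=1], where c="z^7"]]
  have "integral {0..2*pi} (\<lambda>\<theta>. Fc a b lam 1 \<theta> (rsol \<theta> z) / Ysol \<theta> z) =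
     integral {0..2*pi} (\<lambda>\<theta>. lam 1 * z * (1 - k * sin \<theta>) + z^4 * Qt a b 1 \<theta> - z^7 * (Tt a b 1 \<theta> / (1 - k * sin \<theta>)))"
    by (rule integral_cong, subst integrand1[OF z]) (simp add: k_def)
  also have "\<dots> = Phi (lam 1) (b 1 4 0) (b 1 2 2 - a 1 3 1) (b 1 0 4 - a 1 1 3) z"
    apply (subst integral_unique[OF I])
    apply (subst Kform[OF z, symmetric])
    apply (simp add: k_def algebra_simps)
    done
  finally have I2: "integral {0..2*pi} (\<lambda>\<theta>. Fc a b lam 1 \<theta> (rsol \<theta> z) / Ysol \<theta> z) = Phi (lam 1) (b 1 4 0) (b 1 2 2 - a 1 3 1) (b 1 0 4 - a 1 1 3) z" .
  have Y: "Ysol (2*pi) z = 1" by (simp add: Ysol_def)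
  show ?thesis unfolding f1_def y1_def Y I2 by simp
qed

lemma cond2_D1: "cond2 a b lam \<Longrightarrow> cos \<theta> * Ahat b 1 \<theta> - sin \<theta> * Ahat a 1 \<theta> = 0"
  proof -
  assume c: "cond2 a b lam"
  have eqs: "a 1 1 3 = b 1 0 4" "a 1 3 1 = b 1 2 2" "b 1 4 0 = 0" "a 1 2 2 = b 1 1 3" "a 1 4 0 = b 1 3 1" "a 1 0 4 = 0"
    using c unfolding cond2_def by auto
  show ?thesis unfolding Ahat_expand eqs by algebra
qed

lemma cond2_T: "cond2 a b lam \<Longrightarrow> Tt a b 1 \<theta> = 0"
  unfolding Tt_def using cond2_D1 by simp

lemma cond2_Q: "cond2 a b lam \<Longrightarrow> Qt a b 1 \<theta> = b 1 3 1 * cos \<theta>^3 + b 1 2 2 * cos \<theta>^2 * sin \<theta> + b 1 1 3 * cos \<theta> * sin \<theta>^2 + b 1 0 4 * sin \<theta>^3"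
proof -
  assume c: "cond2 a b lam"
  have e: "sin \<theta>^2 + cos \<theta>^2 = 1" by (rule sin_cos_squared_add)
  have eqs: "a 1 1 3 = b 1 0 4" "a 1 3 1 = b 1 2 2" "b 1 4 0 = 0" "a 1 2 2 = b 1 1 3" "a 1 4 0 = b 1 3 1" "a 1 0 4 = 0"
    using c unfolding cond2_def by auto
  show ?thesis unfolding Qt_def Ahat_expand eqs using e by algebra
qed

definition Gf :: "(nat \<Rightarrow> nat \<Rightarrow> nat \<Rightarrow> real) \<Rightarrow> real \<Rightarrow> real" where
  "Gf b \<theta> = b 1 3 1 * (sin \<theta> - sin \<theta>^3/3) - b 1 2 2 * cos \<theta>^3/3 + b 1 1 3 * sin \<theta>^3/3 + b 1 0 4 * (cos \<theta>^3/3 - cos \<theta>)"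

lemma Gf_deriv: "cond2 a b lam \<Longrightarrow> (Gf b has_real_derivative Qt a b 1 \<theta>) (at \<theta>)"
proof -
  assume c: "cond2 a b lam"
  have e: "sin \<theta>^2 + cos \<theta>^2 = 1" by (rule sin_cos_squared_add)
  show ?thesis unfolding cond2_Q[OF c] Gf_def
    by (auto intro!: derivative_eq_intros) (insert e, algebra)
qed

lemma Gf_per: "Gf b (2*pi) = Gf b 0" by (simp add: Gf_def)

lemma y1_eq:
  assumes c: "cond2 a b lam" and z: "0 < z" "3*z^3 < 1" and th: "0 \<le> \<theta>"
  shows "y1 a b lam \<theta> z = Ysol \<theta> z * (z^4 * (Gf b \<theta> - Gf b 0))"
proof -
  have "integral {0..\<theta>} (\<lambda>s. Fc a b lam 1 s (rsol s z) / Ysol s z) = integral {0..\<theta>} (\<lambda>s. z^4 * Qt a b 1 s)"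
    apply (rule integral_cong)
    apply (subst integrand1[OF z])
    apply (subst cond2_T[OF c])
    using c by (simp add: cond2_def)
  also have "\<dots> = z^4 * (Gf b \<theta> - Gf b 0)"
  proof -
    have "((\<lambda>s. z^4 * Qt a b 1 s) has_integral (z^4 * Gf b \<theta> - z^4 * Gf b 0)) {0..\<theta>}"
      apply (rule fundamental_theorem_of_calculus[OF th])
      using Gf_deriv[OF c] by (auto intro!: derivative_eq_intros simp: has_real_derivative_iff_has_vector_derivative[symmetric] has_field_derivative_at_within)
    from integral_unique[OF this] show ?thesis by (simp add: algebra_simps)
  qed
  finally show ?thesis unfolding y1_def by simp
qed

lemma deriv2_F0: "deriv (deriv (\<lambda>\<rho>. Fc a b lam 0 s \<rho>)) r = 12 * r^2 * cos s"
proof -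
  have d1: "deriv (\<lambda>\<rho>. Fc a b lam 0 s \<rho>) = (\<lambda>\<rho>. 4 * \<rho>^3 * cos s)"
  proof
    fix \<rho> :: real
    have "((\<lambda>\<rho>. \<rho>^4 * cos s) has_real_derivative 4 * \<rho>^3 * cos s) (at \<rho>)"
      by (auto intro!: derivative_eq_intros)
    then show "deriv (\<lambda>\<rho>. Fc a b lam 0 s \<rho>) \<rho> = 4 * \<rho>^3 * cos s" unfolding Fc0 by (rule DERIV_imp_deriv)
  qed
  have "((\<lambda>\<rho>. 4 * \<rho>^3 * cos s) has_real_derivative 12 * r^2 * cos s) (at r)"
    by (auto intro!: derivative_eq_intros)
  then show ?thesis unfolding d1 by (rule DERIV_imp_deriv)
qed

lemma deriv_F1: assumes c: "cond2 a b lam" shows "deriv (\<lambda>\<rho>. Fc a b lam 1 s \<rho>) r = 4 * r^3 * Qt a b 1 s"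
proof -
  have l: "lam 1 = 0" using c by (simp add: cond2_def)
  have e: "(\<lambda>\<rho>. Fc a b lam 1 s \<rho>) = (\<lambda>\<rho>. \<rho>^4 * Qt a b 1 s)"
    unfolding Fc1 cond2_T[OF c] l by simp
  have "((\<lambda>\<rho>. \<rho>^4 * Qt a b 1 s) has_real_derivative 4 * r^3 * Qt a b 1 s) (at r)"
    by (auto intro!: derivative_eq_intros)
  then show ?thesis unfolding e by (rule DERIV_imp_deriv)
qed

lemma integrand2:
  assumes c: "cond2 a b lam" and z: "0 < z" "3*z^3 < 1" and th: "0 \<le> \<theta>"
  defines "g \<equiv> Gf b \<theta> - Gf b 0" and "u \<equiv> 1 - 3*z^3 * sin \<theta>"
  shows "(2 * Fc a b lam 2 \<theta> (rsol \<theta> z)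
         + deriv (deriv (\<lambda>\<rho>. Fc a b lam 0 \<theta> \<rho>)) (rsol \<theta> z) * (y1 a b lam \<theta> z)^2
         + 2 * deriv (\<lambda>\<rho>. Fc a b lam 1 \<theta> \<rho>) (rsol \<theta> z) * y1 a b lam \<theta> z) / Ysol \<theta> z
    = 2 * (lam 2 * z * u + z^4 * Qt a b 2 \<theta> - z^7 * (Tt a b 2 \<theta> / u))
      + 4 * z^7 * (2 * g * Qt a b 1 \<theta> / u + g^2 * (3 * z^3 * cos \<theta>) / u^2)"
proof -
  define v where "v = u powr (1/3)"
  have u: "0 < u" unfolding u_def by (rule u_pos[OF z])
  note pf = powr_facts[OF u, folded v_def]
  have r: "rsol \<theta> z = z / v" unfolding rsol_def u_def[symmetric] pf by simp
  have Y: "Ysol \<theta> z = 1/v^4" unfolding Ysol_def u_def[symmetric] pf by simp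
  have y: "y1 a b lam \<theta> z = 1/v^4 * (z^4 * g)" unfolding y1_eq[OF c z th] Y g_def ..
  show ?thesis
    unfolding y deriv2_F0 deriv_F1[OF c] Fc2[OF cond2_D1[OF c]] r Y pf(3)[symmetric]
    using pf(4) by (simp add: field_simps) (simp add: power_numeral_reduce algebra_simps)
qed

lemma Kint:
  assumes z: "0 < z" "3*z^3 < 1"
  shows "((\<lambda>\<theta>. L * z * (1 - 3*z^3 * sin \<theta>) + z^4 * Qt a b m \<theta> - z^7 * (Tt a b m \<theta> / (1 - 3*z^3 * sin \<theta>))) has_integral
     Phi L (b m 4 0) (b m 2 2 - a m 3 1) (b m 0 4 - a m 1 3) z) {0..2*pi}"
proof -
  define k where "k = 3*z^3"
  have k: "0 < k" "k < 1" using z by (auto simp: k_def)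
  note I = has_integral_diff[OF has_integral_add[OF has_integral_mult_right[OF int_u[where k=k], where c="L * z"]
     has_integral_mult_right[OF int_Q[where a=a and b=b and m=m], where c="z^4"]]
     has_integral_mult_right[OF int_T[OF k, where a=a and b=b and m=m], where c="z^7"]]
  show ?thesis unfolding k_def[symmetric]
    apply (rule has_integral_eq_rhs[OF I])
    apply (subst Kform[OF z, symmetric])
    apply (simp add: k_def algebra_simps)
    done
qed

lemma f2_eq:
  assumes c: "cond2 a b lam" and z: "0 < z" "3*z^3 < 1"
  shows "f2 a b lam z = Phi (lam 2) (b 2 4 0) (b 2 2 2 - a 2 3 1) (b 2 0 4 - a 2 1 3) z"
proof -
  define g where "g = (\<lambda>\<theta>. Gf b \<theta> - Gf b 0)"
  define u where "u = (\<lambda>\<theta>::real. 1 - 3*z^3 * sin \<theta>)"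
  have u: "u \<theta> \<noteq> 0" for \<theta> unfolding u_def using u_pos[OF z, of \<theta>] by simp
  define Psi where "Psi = (\<lambda>\<theta>. (g \<theta>)^2 / u \<theta>)"
  have PD: "(Psi has_vector_derivative (2 * g \<theta> * Qt a b 1 \<theta> / u \<theta> + (g \<theta>)^2 * (3 * z^3 * cos \<theta>) / (u \<theta>)^2)) (at \<theta> within {0..2*pi})" for \<theta>
  proof -
    have gD: "(g has_real_derivative Qt a b 1 \<theta>) (at \<theta>)" unfolding g_def
      using Gf_deriv[OF c] by (auto intro!: derivative_eq_intros)
    have uD: "(u has_real_derivative - (3 * z^3 * cos \<theta>)) (at \<theta>)" unfolding u_def
      by (auto intro!: derivative_eq_intros)
    have "(Psi has_real_derivative ((of_nat 2 * (Qt a b 1 \<theta> * g \<theta> ^ (2 - Suc 0))) * u \<theta> - (g \<theta>)^2 * (- (3 * z^3 * cos \<theta>))) / (u \<theta> * u \<theta>)) (at \<theta>)"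
      unfolding Psi_def by (rule DERIV_divide[OF DERIV_power[OF gD] uD u])
    moreover have "((of_nat 2 * (Qt a b 1 \<theta> * g \<theta> ^ (2 - Suc 0))) * u \<theta> - (g \<theta>)^2 * (- (3 * z^3 * cos \<theta>))) / (u \<theta> * u \<theta>)
        = 2 * g \<theta> * Qt a b 1 \<theta> / u \<theta> + (g \<theta>)^2 * (3 * z^3 * cos \<theta>) / (u \<theta>)^2"
      using u[of \<theta>] by (simp add: field_simps power2_eq_square)
    ultimately have "(Psi has_real_derivative (2 * g \<theta> * Qt a b 1 \<theta> / u \<theta> + (g \<theta>)^2 * (3 * z^3 * cos \<theta>) / (u \<theta>)^2)) (at \<theta>)"
      by simp
    then show ?thesis
      by (simp add: has_real_derivative_iff_has_vector_derivative has_vector_derivative_at_within)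
  qed
  have IP: "((\<lambda>\<theta>. 2 * g \<theta> * Qt a b 1 \<theta> / u \<theta> + (g \<theta>)^2 * (3 * z^3 * cos \<theta>) / (u \<theta>)^2) has_integral 0) {0..2*pi}"
    using fundamental_theorem_of_calculus[of 0 "2*pi" Psi, OF _ PD] by (simp add: Psi_def g_def Gf_per)
  note I = has_integral_add[OF has_integral_mult_right[OF Kint[OF z, where L="lam 2" and a=a and b=b and m=2], where c=2]
     has_integral_mult_right[OF IP, where c="4*z^7"]]
  have I2: "((\<lambda>s. (2 * Fc a b lam 2 s (rsol s z)
         + deriv (deriv (\<lambda>\<rho>. Fc a b lam 0 s \<rho>)) (rsol s z) * (y1 a b lam s z)^2
         + 2 * deriv (\<lambda>\<rho>. Fc a b lam 1 s \<rho>) (rsol s z) * y1 a b lam s z) / Ysol s z) has_integral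
       (2 * Phi (lam 2) (b 2 4 0) (b 2 2 2 - a 2 3 1) (b 2 0 4 - a 2 1 3) z + 4*z^7*0)) {0..2*pi}"
    apply (rule has_integral_eq[OF _ I])
    apply (subst integrand2[OF c z])
    by (auto simp: g_def u_def)
  have Y: "Ysol (2*pi) z = 1" by (simp add: Ysol_def)
  show ?thesis unfolding f2_def y2_def Y integral_unique[OF I2] by simp
qed

lemma zs_props:
  fixes t :: real assumes t: "0 < t" "t < 1"
  shows "0 < zs t" "3*(zs t)^3 < 1" "Tz (zs t) = t" "(zs t)^3 = (1-t^2)/(3*(1+t^2))"
proof -
  have p: "0 < (1-t^2)/(3*(1+t^2))" using t by (intro divide_pos_pos) (auto simp: power_less_one_iff intro: add_pos_nonneg)
  show z3: "(zs t)^3 = (1-t^2)/(3*(1+t^2))" unfolding zs_def using powr_facts(3)[OF p] .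
  show "0 < zs t" unfolding zs_def using powr_facts(4)[OF p] .
  have q: "1 + t^2 > 0" by (simp add: add_pos_nonneg)
  show "3*(zs t)^3 < 1" unfolding z3 using t q by (simp add: field_simps)
  have t2: "t^2 \<noteq> 1" using t by (simp add: power_less_one_iff less_imp_neq)
  have "(1 - 3*(zs t)^3)/(1 + 3*(zs t)^3) = t^2" unfolding z3 using q t2
    by (simp add: field_simps)
  then show "Tz (zs t) = t" unfolding Tz_def using t by simp
qed

lemma zs_Tz:
  fixes z :: real assumes z: "0 < z" "3*z^3 < 1"
  shows "zs (Tz z) = z"
proof -
  have "((1 - (Tz z)^2)/(3*(1 + (Tz z)^2))) = ((1 - (Tz z)^2)/(1 + (Tz z)^2))/3" by simp
  also have "\<dots> = z^3" unfolding Tz_props(3)[OF z, symmetric] by simp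
  finally have "((1 - (Tz z)^2)/(3*(1 + (Tz z)^2))) = z^3" .
  moreover have "(z^3) powr (1/3) = z"
  proof -
    have e: "z^3 = z powr 3" using z by simp
    have "(z^3) powr (1/3) = (z powr 3) powr (1/3)" by (simp only: e)
    also have "\<dots> = z powr (3 * (1/3))" by (rule powr_powr)
    also have "\<dots> = z" using z by simp
    finally show ?thesis .
  qed
  ultimately show ?thesis unfolding zs_def by simp
qed

lemma open_Dom: "open Dom" unfolding Dom_def by simp

lemma simple_zeros_cong:
  assumes "\<And>z. z \<in> Dom \<Longrightarrow> f z = g z"
  shows "simple_zeros f = simple_zeros g"
proof -
  have "simple_zero f z \<longleftrightarrow> simple_zero g z" if z: "z \<in> Dom" for z
  proof -
    have "(f has_real_derivative d) (at z) \<longleftrightarrow> (g has_real_derivative d) (at z)" for d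
      using has_field_derivative_transform_within_open[OF _ open_Dom z, of f d g]
            has_field_derivative_transform_within_open[OF _ open_Dom z, of g d f] assms by auto
    then show ?thesis unfolding simple_zero_def using assms[OF z] by simp
  qed
  then show ?thesis unfolding simple_zeros_def by auto
qed

lemma Phi_zero_iff:
  fixes z :: real assumes z: "0 < z" "3*z^3 < 1"
  shows "Phi L B0 B1 B2 z = 0 \<longleftrightarrow> Np L B0 B1 B2 (Tz z) = 0"
proof -
  have t: "0 < Tz z" using Tz_props[OF z] by simp
  have "36*(1 + Tz z)^4*(1 + (Tz z)^2) \<noteq> 0" using t by (simp add: add_nonneg_eq_0_iff)
  then show ?thesis unfolding Phi_def using z by simp
qed

lemma inv_sum_inj:
  fixes t1 t2 :: real assumes "0 < t1" "t1 < 1" "0 < t2" "t2 < 1" "t1 + 1/t1 = t2 + 1/t2"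
  shows "t1 = t2"
proof -
  have "(t1 - t2) * (t1*t2 - 1) = 0" using assms(5) assms(1,3) by (simp add: field_simps)
  moreover have "t1*t2 < 1" using assms by (metis less_trans mult_strict_mono' less_imp_le mult.right_neutral)
  ultimately show ?thesis by simp
qed

definition qpoly :: "real \<Rightarrow> real \<Rightarrow> real \<Rightarrow> real \<Rightarrow> real poly" where
  "qpoly L B0 B1 B2 =
    (let H1 = 72*L - 3*B0 - B1 - 3*B2; H2 = 288*L - 12*B0 - 4*B1 + 4*B2;
         H3 = 504*L - 5*B0 + 9*B1 - 5*B2; H4 = 576*L + 40*B0 - 8*B1 + 8*B2
     in [:H4 - 2*H2, H3 - 3*H1, H2, H1:])"

lemma poly_qpoly: "poly (qpoly L B0 B1 B2) W = Q3 L B0 B1 B2 W"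
  unfolding qpoly_def Q3_def Let_def by (simp add: algebra_simps power2_eq_square power3_eq_cube)

lemma qpoly_zero: assumes "qpoly L B0 B1 B2 = 0" shows "Np L B0 B1 B2 t = 0"
proof -
  have h: "576*L + 40*B0 - 8*B1 + 8*B2 - 2*(288*L - 12*B0 - 4*B1 + 4*B2) = 0"
      "504*L - 5*B0 + 9*B1 - 5*B2 - 3*(72*L - 3*B0 - B1 - 3*B2) = 0"
      "288*L - 12*B0 - 4*B1 + 4*B2 = 0" "72*L - 3*B0 - B1 - 3*B2 = 0"
    using assms unfolding qpoly_def Let_def pCons_eq_0_iff by simp_all
  have h1: "72*L - 3*B0 - B1 - 3*B2 = 0" and h2: "288*L - 12*B0 - 4*B1 + 4*B2 = 0"
    and h3: "504*L - 5*B0 + 9*B1 - 5*B2 = 0" and h4: "576*L + 40*B0 - 8*B1 + 8*B2 = 0"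
    using h by (smt (verit))+
  show ?thesis unfolding Np_def Let_def h1 h2 h3 h4 by simp
qed

lemma degree_qpoly: "degree (qpoly L B0 B1 B2) \<le> 3"
  unfolding qpoly_def Let_def
  by (simp add: degree_pCons_eq_if)

lemma Phi_upper:
  assumes nz: "\<not> (\<forall>z\<in>Dom. Phi L B0 B1 B2 z = 0)"
  shows "finite (simple_zeros (Phi L B0 B1 B2)) \<and> card (simple_zeros (Phi L B0 B1 B2)) \<le> 3"
proof -
  define q where "q = qpoly L B0 B1 B2"
  have q0: "q \<noteq> 0"
  proof
    assume "q = 0"
    then have "Np L B0 B1 B2 t = 0" for t using qpoly_zero q_def by simp
    then have "Phi L B0 B1 B2 z = 0" for z unfolding Phi_def by simp
    then show False using nz by simp
  qed
  define Z where "Z = {z \<in> Dom. Phi L B0 B1 B2 z = 0}"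
  define f where "f = (\<lambda>z. Tz z + 1 / Tz z)"
  have inj: "inj_on f Z"
  proof
    fix z1 z2 assume "z1 \<in> Z" "z2 \<in> Z" "f z1 = f z2"
    then have v: "0 < z1" "3*z1^3 < 1" "0 < z2" "3*z2^3 < 1" by (auto simp: Z_def Dom_iff)
    have "Tz z1 = Tz z2" using inv_sum_inj Tz_props(1,2)[OF v(1,2)] Tz_props(1,2)[OF v(3,4)] \<open>f z1 = f z2\<close>
      unfolding f_def by blast
    then show "z1 = z2" using zs_Tz[OF v(1,2)] zs_Tz[OF v(3,4)] by metis
  qed
  have sub: "f ` Z \<subseteq> {W. poly q W = 0}"
  proof
    fix W assume "W \<in> f ` Z"
    then obtain z where z: "z \<in> Z" "W = f z" by auto
    then have v: "0 < z" "3*z^3 < 1" by (auto simp: Z_def Dom_iff)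
    have t: "0 < Tz z" using Tz_props[OF v] by simp
    have "Np L B0 B1 B2 (Tz z) = 0" using z(1) Phi_zero_iff[OF v] by (simp add: Z_def)
    then have "(Tz z)^3 * Q3 L B0 B1 B2 (Tz z + 1/Tz z) = 0" using Np_Q3[OF t] by simp
    then show "W \<in> {W. poly q W = 0}" using t z(2) by (simp add: q_def poly_qpoly f_def)
  qed
  have fin: "finite (f ` Z)" using finite_subset[OF sub poly_roots_finite[OF q0]] .
  then have finZ: "finite Z" using finite_imageD inj by blast
  have "card Z = card (f ` Z)" using card_image[OF inj] by simp
  also have "\<dots> \<le> card {W. poly q W = 0}" by (rule card_mono[OF poly_roots_finite[OF q0] sub])
  also have "\<dots> \<le> degree q" by (rule card_poly_roots_bound[OF q0])
  also have "\<dots> \<le> 3" unfolding q_def by (rule degree_qpoly)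
  finally have cZ: "card Z \<le> 3" .
  have ss: "simple_zeros (Phi L B0 B1 B2) \<subseteq> Z" unfolding simple_zeros_def simple_zero_def Z_def by auto
  show ?thesis using finite_subset[OF ss finZ] card_mono[OF finZ ss] cZ by simp
qed

lemma simple_root_deriv:
  fixes T N Dn :: "real \<Rightarrow> real"
  assumes T: "(T has_real_derivative Td) (at z0)" and N: "(N has_real_derivative Nd) (at (T z0))"
    and N0: "N (T z0) = 0" and D: "(Dn has_real_derivative Dd) (at (T z0))" and D0: "Dn (T z0) \<noteq> 0"
  shows "((\<lambda>z. pi*z*N(T z)/Dn(T z)) has_real_derivative pi*z0*(Nd*Td)/Dn(T z0)) (at z0)"
proof -
  have NT: "((\<lambda>z. N (T z)) has_real_derivative Nd*Td) (at z0)" by (rule DERIV_chain2[OF N T])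
  have DT: "((\<lambda>z. Dn (T z)) has_real_derivative Dd*Td) (at z0)" by (rule DERIV_chain2[OF D T])
  have P: "((\<lambda>z. pi*z) has_real_derivative pi) (at z0)" by (auto intro!: derivative_eq_intros)
  have A: "((\<lambda>z. pi*z*N(T z)) has_real_derivative pi * N (T z0) + Nd*Td * (pi*z0)) (at z0)"
    by (rule DERIV_mult[OF P NT])
  have F: "((\<lambda>z. pi*z*N(T z)/Dn(T z)) has_real_derivative
     ((pi * N (T z0) + Nd*Td * (pi*z0)) * Dn (T z0) - pi*z0*N(T z0) * (Dd*Td)) / (Dn (T z0) * Dn (T z0))) (at z0)"
    by (rule DERIV_divide[OF A DT D0])
  show ?thesis using F by (rule DERIV_cong) (use D0 N0 in \<open>simp add: field_simps\<close>)
qed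

lemma Tz_deriv:
  fixes z :: real assumes z: "0 < z" "3*z^3 < 1"
  shows "(Tz has_real_derivative inverse (sqrt ((1 - 3*z^3)/(1 + 3*z^3))) / 2 * (-18*z^2/(1+3*z^3)^2)) (at z)"
proof -
  have p1: "1 + 3*z^3 > 0" using z by (simp add: add_pos_nonneg)
  have hD: "((\<lambda>z. (1 - 3*z^3)/(1 + 3*z^3)) has_real_derivative (-18*z^2/(1+3*z^3)^2)) (at z)"
    using p1 by (auto intro!: derivative_eq_intros simp: field_simps power2_eq_square power3_eq_cube)
  have hp: "0 < (1 - 3*z^3)/(1 + 3*z^3)" using z p1 by simp
  have "Tz = (\<lambda>z. sqrt ((1 - 3*z^3)/(1 + 3*z^3)))" by (rule ext) (simp add: Tz_def)
  then show ?thesis using DERIV_chain2[OF DERIV_real_sqrt[OF hp] hD] by simp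
qed

definition Lx :: real where "Lx = -1"
definition B0x :: real where "B0x = -850"
definition B1x :: real where "B1x = 4998"
definition B2x :: real where "B2x = -1352"

lemma Np_x: "Np Lx B0x B1x B2x t = 1536*t^6 - 15488*t^5 + 55488*t^4 - 85376*t^3 + 55488*t^2 - 15488*t + 1536"
  unfolding Np_def Let_def Lx_def B0x_def B1x_def B2x_def by simp

lemma Np_x_fac: "Np Lx B0x B1x B2x t = 64*(2*t-1)*(t-2)*(3*t-1)*(t-3)*(4*t-1)*(t-4)"
  unfolding Np_x by algebra

lemma Np_x_deriv: "(Np Lx B0x B1x B2x has_real_derivative
   9216*t^5 - 77440*t^4 + 221952*t^3 - 256128*t^2 + 110976*t - 15488) (at t)"
proof -
  have "Np Lx B0x B1x B2x = (\<lambda>t. 1536*t^6 - 15488*t^5 + 55488*t^4 - 85376*t^3 + 55488*t^2 - 15488*t + 1536)"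
    by (rule ext) (rule Np_x)
  then show ?thesis by (auto intro!: derivative_eq_intros simp: eval_nat_numeral)
qed

lemma Phi_x_roots:
  "simple_zeros (Phi Lx B0x B1x B2x) = zs ` {1/2, 1/3, 1/4}"
proof
  show "simple_zeros (Phi Lx B0x B1x B2x) \<subseteq> zs ` {1/2, 1/3, 1/4}"
  proof
    fix z assume "z \<in> simple_zeros (Phi Lx B0x B1x B2x)"
    then have zD: "z \<in> Dom" and z0: "Phi Lx B0x B1x B2x z = 0" unfolding simple_zeros_def simple_zero_def by auto
    then have v: "0 < z" "3*z^3 < 1" by (auto simp: Dom_iff)
    define t where "t = Tz z"
    have t: "0 < t" "t < 1" using Tz_props[OF v] by (auto simp: t_def)
    have "Np Lx B0x B1x B2x t = 0" using z0 Phi_zero_iff[OF v] by (simp add: t_def)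
    then have "t = 1/2 \<or> t = 1/3 \<or> t = 1/4" using t unfolding Np_x_fac by auto
    moreover have "z = zs t" using zs_Tz[OF v] by (simp add: t_def)
    ultimately show "z \<in> zs ` {1/2, 1/3, 1/4}" by blast
  qed
next
  show "zs ` {1/2, 1/3, 1/4} \<subseteq> simple_zeros (Phi Lx B0x B1x B2x)"
  proof
    fix z assume "z \<in> zs ` {1/2, 1/3, 1/4::real}"
    then obtain t0 where t0: "t0 \<in> {1/2, 1/3, 1/4::real}" and zt: "z = zs t0" by blast
    have t0r: "0 < t0" "t0 < 1" using t0 by auto
    have v: "0 < z" "3*z^3 < 1" using zs_props[OF t0r] zt by auto
    have Tt: "Tz z = t0" using zs_props[OF t0r] zt by auto
    have zD: "z \<in> Dom" using v by (simp add: Dom_iff)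
    have N0: "Np Lx B0x B1x B2x (Tz z) = 0" unfolding Tt Np_x_fac using t0 by auto
    have t0d: "t0 = 1/2 \<or> t0 = 1/3 \<or> t0 = 1/4" using t0 by blast
    have Nd: "9216*t0^5 - 77440*t0^4 + 221952*t0^3 - 256128*t0^2 + 110976*t0 - 15488 \<noteq> 0"
      using t0d by (elim disjE; hypsubst; simp add: power_divide)
    have p1: "1 + 3*z^3 > 0" using v by (simp add: add_pos_nonneg)
    have hp: "0 < (1 - 3*z^3)/(1 + 3*z^3)" using v p1 by simp
    have Td: "inverse (sqrt ((1 - 3*z^3)/(1 + 3*z^3))) / 2 * (-18*z^2/(1+3*z^3)^2) \<noteq> 0"
      using hp v p1 by simp
    have DD: "((\<lambda>t. 36*(1+t)^4*(1+t^2)) has_real_derivative (36*(4*(1+Tz z)^3)*(1+(Tz z)^2) + 36*(1+Tz z)^4*(2*Tz z))) (at (Tz z))"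
      by (auto intro!: derivative_eq_intros simp: algebra_simps)
    have D0: "36*(1+Tz z)^4*(1+(Tz z)^2) \<noteq> 0" using t0r Tt by (simp add: add_nonneg_eq_0_iff)
    have F: "((\<lambda>z. pi*z*Np Lx B0x B1x B2x (Tz z)/(36*(1+Tz z)^4*(1+(Tz z)^2))) has_real_derivative
       pi*z*((9216*t0^5 - 77440*t0^4 + 221952*t0^3 - 256128*t0^2 + 110976*t0 - 15488) *
        (inverse (sqrt ((1 - 3*z^3)/(1 + 3*z^3))) / 2 * (-18*z^2/(1+3*z^3)^2)))/(36*(1+Tz z)^4*(1+(Tz z)^2))) (at z)"
    proof -
      have ND: "(Np Lx B0x B1x B2x has_real_derivative (9216*t0^5 - 77440*t0^4 + 221952*t0^3 - 256128*t0^2 + 110976*t0 - 15488)) (at (Tz z))"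
        using Np_x_deriv[of t0] Tt by simp
      show ?thesis
        by (rule simple_root_deriv[where T=Tz and N="Np Lx B0x B1x B2x" and Dn="\<lambda>t. 36*(1+t)^4*(1+t^2)", OF Tz_deriv[OF v] ND N0 DD D0])
    qed
    have "Phi Lx B0x B1x B2x = (\<lambda>z. pi*z*Np Lx B0x B1x B2x (Tz z)/(36*(1+Tz z)^4*(1+(Tz z)^2)))"
      by (rule ext) (simp add: Phi_def)
    then have F': "(Phi Lx B0x B1x B2x has_real_derivative
       pi*z*((9216*t0^5 - 77440*t0^4 + 221952*t0^3 - 256128*t0^2 + 110976*t0 - 15488) *
        (inverse (sqrt ((1 - 3*z^3)/(1 + 3*z^3))) / 2 * (-18*z^2/(1+3*z^3)^2)))/(36*(1+Tz z)^4*(1+(Tz z)^2))) (at z)"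
      using F by simp
    have nz: "pi*z*((9216*t0^5 - 77440*t0^4 + 221952*t0^3 - 256128*t0^2 + 110976*t0 - 15488) *
        (inverse (sqrt ((1 - 3*z^3)/(1 + 3*z^3))) / 2 * (-18*z^2/(1+3*z^3)^2)))/(36*(1+Tz z)^4*(1+(Tz z)^2)) \<noteq> 0"
      using Nd Td D0 v by simp
    have "Phi Lx B0x B1x B2x z = 0" using Phi_zero_iff[OF v] N0 by simp
    then show "z \<in> simple_zeros (Phi Lx B0x B1x B2x)"
      unfolding simple_zeros_def simple_zero_def using zD F' nz by blast
  qed
qed

lemma Phi_x_card: "finite (simple_zeros (Phi Lx B0x B1x B2x)) \<and> card (simple_zeros (Phi Lx B0x B1x B2x)) = 3"
proof -
  have inj: "inj_on zs {1/2, 1/3, 1/4::real}"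
  proof (rule inj_onI)
    fix x y :: real assume "x \<in> {1/2, 1/3, 1/4}" "y \<in> {1/2, 1/3, 1/4}" "zs x = zs y"
    then show "x = y" using zs_props(3)[of x] zs_props(3)[of y] by auto
  qed
  show ?thesis unfolding Phi_x_roots using card_image[OF inj] by simp
qed

lemma Phi_x_nz: "\<not> (\<forall>z\<in>Dom. Phi Lx B0x B1x B2x z = 0)"
proof
  assume a: "\<forall>z\<in>Dom. Phi Lx B0x B1x B2x z = 0"
  have t: "0 < (1/5::real)" "(1/5::real) < 1" by auto
  have v: "0 < zs (1/5)" "3*(zs (1/5))^3 < 1" using zs_props[OF t] by auto
  then have "zs (1/5) \<in> Dom" by (simp add: Dom_iff)
  then have "Phi Lx B0x B1x B2x (zs (1/5)) = 0" using a by blast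
  then have "Np Lx B0x B1x B2x (Tz (zs (1/5))) = 0" using Phi_zero_iff[OF v] by simp
  then show False unfolding zs_props(3)[OF t] Np_x_fac by simp
qed

lemma coef_id:
  fixes s :: real assumes s: "0 < s" "s < 1"
  shows "zs s / (36*(1+s)^4*(1+s^2)) = 3 powr (2/3) * (1 - s) powr (1/3) / (108 * (1 + s) powr (11/3) * (1 + s^2) powr (4/3))"
proof -
  have p1: "0 < 1 - s" "0 < 1 + s" "0 < 1 + s^2" using s by (auto intro: add_pos_nonneg)
  define A where "A = (1-s) powr (1/3)"
  define B where "B = (1+s) powr (1/3)"
  define C where "C = (1+s^2) powr (1/3)"
  define T where "T = (3::real) powr (1/3)"
  have A0: "A > 0" unfolding A_def using p1 by simp
  have B0: "B > 0" unfolding B_def using p1 by simp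
  have C0: "C > 0" unfolding C_def using p1 by simp
  have T0: "T > 0" unfolding T_def by simp
  have B3: "B^3 = 1+s" unfolding B_def using powr_facts(3)[OF p1(2)] .
  have C3: "C^3 = 1+s^2" unfolding C_def using powr_facts(3)[OF p1(3)] .
  have T3: "T^3 = 3" unfolding T_def using powr_facts(3)[of 3] by simp
  have z: "zs s = A*B/(T*C)"
  proof -
    have eq: "(1-s^2)/(3*(1+s^2)) = ((1-s)*(1+s))/(3*(1+s^2))" by (simp add: algebra_simps power2_eq_square)
    show ?thesis unfolding zs_def eq A_def B_def C_def T_def by (simp only: powr_divide powr_mult)
  qed
  have T2: "3 powr (2/3) = T^2" unfolding T_def by (simp add: powr_power)
  have B11: "(1+s) powr (11/3) = B^11" unfolding B_def using p1 by (simp add: powr_power)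
  have C4: "(1+s^2) powr (4/3) = C^4" unfolding C_def using p1 by (simp add: powr_power)
  show ?thesis unfolding z T2 B11 C4 unfolding A_def[symmetric] B3[symmetric] C3[symmetric]
    using A0 B0 C0 T0 T3 by (simp add: field_simps) (simp add: power_numeral_reduce algebra_simps)
qed

lemma Hpoly_Np: "Hpoly a b lam s = Np (lam 2) (b 2 4 0) (b 2 2 2 - a 2 3 1) (b 2 0 4 - a 2 1 3) s"
  unfolding Hpoly_def Np_def Let_def by (simp add: algebra_simps)

lemma part4:
  assumes c: "cond2 a b lam" and s: "0 < s" "s < 1"
  shows "f2 a b lam (zs s) = pi * 3 powr (2/3) * (1 - s) powr (1/3)
          / (108 * (1 + s) powr (11/3) * (1 + s^2) powr (4/3)) * Hpoly a b lam s"
proof -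
  have v: "0 < zs s" "3*(zs s)^3 < 1" using zs_props[OF s] by auto
  have T: "Tz (zs s) = s" using zs_props[OF s] by auto
  have "f2 a b lam (zs s) = pi * (zs s / (36*(1+s)^4*(1+s^2))) * Hpoly a b lam s"
    unfolding f2_eq[OF c v] Phi_def T Hpoly_Np by simp
  then show ?thesis unfolding coef_id[OF s] by simp
qed

lemma f1_simple: "0 < z \<and> 3*z^3 < 1 \<Longrightarrow> f1 a b lam z = Phi (lam 1) (b 1 4 0) (b 1 2 2 - a 1 3 1) (b 1 0 4 - a 1 1 3) z"
  using f1_eq by blast

theorem mainTheorem10:
  shows
   "(\<forall>a b lam. \<not> (\<forall>z\<in>Dom. f1 a b lam z = 0) \<longrightarrow>
        finite (simple_zeros (f1 a b lam)) \<and> card (simple_zeros (f1 a b lam)) \<le> 3)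
  \<and> (\<exists>a b lam. \<not> (\<forall>z\<in>Dom. f1 a b lam z = 0) \<and>
        finite (simple_zeros (f1 a b lam)) \<and> card (simple_zeros (f1 a b lam)) = 3)
  \<and> (\<forall>a b lam. cond2 a b lam \<longrightarrow> (\<forall>z\<in>Dom. f1 a b lam z = 0))
  \<and> (\<forall>a b lam. cond2 a b lam \<longrightarrow> (\<forall>s\<in>{0<..<1::real}.
        f2 a b lam (zs s) =
          pi * 3 powr (2/3) * (1 - s) powr (1/3)
          / (108 * (1 + s) powr (11/3) * (1 + s^2) powr (4/3)) * Hpoly a b lam s))
  \<and> (\<forall>a b lam. cond2 a b lam \<and> \<not> (\<forall>z\<in>Dom. f2 a b lam z = 0) \<longrightarrow>
        finite (simple_zeros (f2 a b lam)) \<and> card (simple_zeros (f2 a b lam)) \<le> 3)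
  \<and> (\<exists>a b lam. cond2 a b lam \<and> \<not> (\<forall>z\<in>Dom. f2 a b lam z = 0) \<and>
        finite (simple_zeros (f2 a b lam)) \<and> card (simple_zeros (f2 a b lam)) = 3)"
proof (intro conjI)
  show "\<forall>a b lam. \<not> (\<forall>z\<in>Dom. f1 a b lam z = 0) \<longrightarrow>
        finite (simple_zeros (f1 a b lam)) \<and> card (simple_zeros (f1 a b lam)) \<le> 3"
  proof (intro allI impI)
    fix a b lam assume nz: "\<not> (\<forall>z\<in>Dom. f1 a b lam z = 0)"
    have e: "\<And>z. z \<in> Dom \<Longrightarrow> f1 a b lam z = Phi (lam 1) (b 1 4 0) (b 1 2 2 - a 1 3 1) (b 1 0 4 - a 1 1 3) z"
      by (rule f1_eq) (auto simp: Dom_iff)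
    have se: "simple_zeros (f1 a b lam) = simple_zeros (Phi (lam 1) (b 1 4 0) (b 1 2 2 - a 1 3 1) (b 1 0 4 - a 1 1 3))"
      by (rule simple_zeros_cong) (rule e)
    have "\<not> (\<forall>z\<in>Dom. Phi (lam 1) (b 1 4 0) (b 1 2 2 - a 1 3 1) (b 1 0 4 - a 1 1 3) z = 0)" using nz e by auto
    then show "finite (simple_zeros (f1 a b lam)) \<and> card (simple_zeros (f1 a b lam)) \<le> 3"
      unfolding se by (rule Phi_upper)
  qed
  define ax :: "nat \<Rightarrow> nat \<Rightarrow> nat \<Rightarrow> real" where "ax = (\<lambda>k i j. 0)"
  define bx :: "nat \<Rightarrow> nat \<Rightarrow> nat \<Rightarrow> real" where "bx = (\<lambda>k i j. if k = 1 \<or> (i,j) \<noteq> (4,0) \<and> (i,j) \<noteq> (2,2) \<and> (i,j) \<noteq> (0,4) then 0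
      else if (i,j) = (4,0) then B0x else if (i,j) = (2,2) then B1x else B2x)"
  define lx :: "nat \<Rightarrow> real" where "lx = (\<lambda>k. if k = 1 then 0 else Lx)"
  define by1 :: "nat \<Rightarrow> nat \<Rightarrow> nat \<Rightarrow> real" where "by1 = (\<lambda>k i j. if (i,j) = (4,0) then B0x else if (i,j) = (2,2) then B1x
      else if (i,j) = (0,4) then B2x else 0)"
  show "\<exists>a b lam. \<not> (\<forall>z\<in>Dom. f1 a b lam z = 0) \<and>
        finite (simple_zeros (f1 a b lam)) \<and> card (simple_zeros (f1 a b lam)) = 3"
  proof (intro exI conjI)
    have e: "\<And>z. z \<in> Dom \<Longrightarrow> f1 ax by1 (\<lambda>k. Lx) z = Phi Lx B0x B1x B2x z"
      using f1_eq by (auto simp: Dom_iff ax_def by1_def)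
    show "\<not> (\<forall>z\<in>Dom. f1 ax by1 (\<lambda>k. Lx) z = 0)" using Phi_x_nz e by simp
    have se: "simple_zeros (f1 ax by1 (\<lambda>k. Lx)) = simple_zeros (Phi Lx B0x B1x B2x)"
      by (rule simple_zeros_cong) (rule e)
    show "finite (simple_zeros (f1 ax by1 (\<lambda>k. Lx)))" "card (simple_zeros (f1 ax by1 (\<lambda>k. Lx))) = 3"
      unfolding se using Phi_x_card by auto
  qed
  show "\<forall>a b lam. cond2 a b lam \<longrightarrow> (\<forall>z\<in>Dom. f1 a b lam z = 0)"
  proof (intro allI impI ballI)
    fix a b lam z assume c: "cond2 a b lam" and z: "z \<in> Dom"
    have "f1 a b lam z = Phi 0 0 0 0 z" using f1_eq[of z a b lam] z c by (simp add: Dom_iff cond2_def)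
    then show "f1 a b lam z = 0" by (simp add: Phi_def Np_def)
  qed
  show "\<forall>a b lam. cond2 a b lam \<longrightarrow> (\<forall>s\<in>{0<..<1::real}.
        f2 a b lam (zs s) =
          pi * 3 powr (2/3) * (1 - s) powr (1/3)
          / (108 * (1 + s) powr (11/3) * (1 + s^2) powr (4/3)) * Hpoly a b lam s)"
    using part4 by auto
  show "\<forall>a b lam. cond2 a b lam \<and> \<not> (\<forall>z\<in>Dom. f2 a b lam z = 0) \<longrightarrow>
        finite (simple_zeros (f2 a b lam)) \<and> card (simple_zeros (f2 a b lam)) \<le> 3"
  proof (intro allI impI)
    fix a b lam assume h: "cond2 a b lam \<and> \<not> (\<forall>z\<in>Dom. f2 a b lam z = 0)"
    have e: "\<And>z. z \<in> Dom \<Longrightarrow> f2 a b lam z = Phi (lam 2) (b 2 4 0) (b 2 2 2 - a 2 3 1) (b 2 0 4 - a 2 1 3) z"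
      by (rule f2_eq) (use h in \<open>auto simp: Dom_iff\<close>)
    have se: "simple_zeros (f2 a b lam) = simple_zeros (Phi (lam 2) (b 2 4 0) (b 2 2 2 - a 2 3 1) (b 2 0 4 - a 2 1 3))"
      by (rule simple_zeros_cong) (rule e)
    have "\<not> (\<forall>z\<in>Dom. Phi (lam 2) (b 2 4 0) (b 2 2 2 - a 2 3 1) (b 2 0 4 - a 2 1 3) z = 0)" using h e by auto
    then show "finite (simple_zeros (f2 a b lam)) \<and> card (simple_zeros (f2 a b lam)) \<le> 3"
      unfolding se by (rule Phi_upper)
  qed
  show "\<exists>a b lam. cond2 a b lam \<and> \<not> (\<forall>z\<in>Dom. f2 a b lam z = 0) \<and>
        finite (simple_zeros (f2 a b lam)) \<and> card (simple_zeros (f2 a b lam)) = 3"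
  proof (intro exI conjI)
    show c: "cond2 ax bx lx" unfolding cond2_def ax_def bx_def lx_def by simp
    have e: "\<And>z. z \<in> Dom \<Longrightarrow> f2 ax bx lx z = Phi Lx B0x B1x B2x z"
      using f2_eq[OF c] by (auto simp: Dom_iff ax_def bx_def lx_def)
    show "\<not> (\<forall>z\<in>Dom. f2 ax bx lx z = 0)" using Phi_x_nz e by simp
    have se: "simple_zeros (f2 ax bx lx) = simple_zeros (Phi Lx B0x B1x B2x)"
      by (rule simple_zeros_cong) (rule e)
    show "finite (simple_zeros (f2 ax bx lx))" "card (simple_zeros (f2 ax bx lx)) = 3"
      unfolding se using Phi_x_card by auto
  qed
qed

end
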